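(* Let $\nu$ be a Krull valuation on $\mathbb{K}[x]$ and $Q$ a key polynomial for $\nu$. Suppose there exist an integer $e\ge1$ and a nonzero $h\in\mathbb{K}[x]$ with $\deg h<\deg Q$ and $\nu(Q^e)=\nu(h)$, and let $r=Q^e/h\in\mathbb{K}(x)$. Then $\nu_Q(r)=0$ and the residue $r\nu_Q$ of $r$ in the residue field $\mathbb{K}(x)\nu_Q$ is transcendental over $\mathbb{K}\nu$; in particular it is transcendental over any algebraic extension of $\mathbb{K}\nu$ contained in $\mathbb{K}(x)\nu_Q$.
   Context: Truncation: every $f\in\mathbb{K}[x]$ has a unique $Q$-expansion $f=\sum f_iQ^i$ with $\deg f_i<\deg Q$; $\nu_Q(f)=\min_i\nu(f_iQ^i)$. For a key polynomial $Q$, $\nu_Q$ is a valuation on $\mathbb{K}[x]$, extended to $\mathbb{K}(x)$; $\mathbb{K}\nu$ is the residue field of $\nu$ on $\mathbb{K}$. Key polynomials: for nonzero $f$, with Hasse derivatives $\partial_bf=\sum_{i\ge b}\binom{i}{b}a_ix^{i-b}$ for $f=\sum a_ix^i$, $\epsilon(f)=\max_{1\le b\le\deg f}(\nu(f)-\nu(\partial_bf))/b$ if $\deg f>0$ and $\epsilon(f)=-\infty$ if $f$ is constant; a monic $Q$ is a key polynomial for $\nu$ if $\epsilon(f)\ge\epsilon(Q)$ implies $\deg f\ge\deg Q$ for all $f$. *)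

theory Defs
  imports "HOL-Computational_Algebra.Polynomial" "HOL-Computational_Algebra.Fraction_Field"
          "HOL-Algebra.Finite_Extensions"
begin

text \<open>The value at 0 is infinity; we only ever evaluate v at nonzero polynomials
  (values of nonzero polynomials are finite, i.e. the support is trivial, as is
  needed to extend the valuation to K(x)).\<close>

definition krull_valuation :: "('a::field poly \<Rightarrow> 'g::linordered_ab_group_add) \<Rightarrow> bool" where
  "krull_valuation v \<longleftrightarrow>
     (\<forall>f g. f \<noteq> 0 \<longrightarrow> g \<noteq> 0 \<longrightarrow> v (f * g) = v f + v g) \<and>
     (\<forall>f g. f \<noteq> 0 \<longrightarrow> g \<noteq> 0 \<longrightarrow> f + g \<noteq> 0 \<longrightarrow> min (v f) (v g) \<le> v (f + g))"

definition hasse_deriv :: "nat \<Rightarrow> 'a::field poly \<Rightarrow> 'a poly" where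
  "hasse_deriv b f = (\<Sum>i\<in>{b..Polynomial.degree f}. Polynomial.monom (of_nat (i choose b) * Polynomial.coeff f i) (i - b))"

primrec nmul :: "nat \<Rightarrow> 'g::monoid_add \<Rightarrow> 'g" where
  "nmul 0 x = 0"
| "nmul (Suc n) x = x + nmul n x"

text \<open>eps_ge v f g expresses \<open>\<epsilon>(f) \<ge> \<epsilon>(g)\<close> for nonzero f, g, where
  \<open>\<epsilon>(f) = max_{1\<le>b\<le>deg f} (\<nu>(f) - \<nu>(\<partial>_b f))/b\<close> (terms with \<open>\<partial>_b f = 0\<close> are \<open>-\<infinity>\<close>)
  and \<open>\<epsilon>(f) = -\<infinity>\<close> for constant f. The quotients live in the divisible hull of
  the value group; the comparison
  \<open>(\<nu> f - \<nu> \<partial>_b f)/b \<ge> (\<nu> g - \<nu> \<partial>_c g)/c\<close> is written division-free as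
  \<open>c(\<nu> f - \<nu> \<partial>_b f) \<ge> b(\<nu> g - \<nu> \<partial>_c g)\<close>.\<close>
definition eps_ge :: "('a::field poly \<Rightarrow> 'g::linordered_ab_group_add) \<Rightarrow> 'a poly \<Rightarrow> 'a poly \<Rightarrow> bool" where
  "eps_ge v f g \<longleftrightarrow>
     Polynomial.degree g = 0 \<or>
     (Polynomial.degree f > 0 \<and>
      (\<exists>b\<in>{1..Polynomial.degree f}. hasse_deriv b f \<noteq> 0 \<and>
         (\<forall>c\<in>{1..Polynomial.degree g}. hasse_deriv c g \<noteq> 0 \<longrightarrow>
            nmul b (v g - v (hasse_deriv c g)) \<le> nmul c (v f - v (hasse_deriv b f)))))"

definition key_polynomial :: "('a::field poly \<Rightarrow> 'g::linordered_ab_group_add) \<Rightarrow> 'a poly \<Rightarrow> bool" where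
  "key_polynomial v Q \<longleftrightarrow> Polynomial.lead_coeff Q = 1 \<and>
     (\<forall>f. f \<noteq> 0 \<longrightarrow> eps_ge v f Q \<longrightarrow> Polynomial.degree Q \<le> Polynomial.degree f)"

text \<open>The i-th coefficient of the Q-expansion \<open>f = \<Sum> f_i Q^i\<close>, \<open>deg f_i < deg Q\<close>.\<close>
definition qexp :: "'a::field poly \<Rightarrow> 'a poly \<Rightarrow> nat \<Rightarrow> 'a poly" where
  "qexp Q f i = (f div Q ^ i) mod Q"

definition trunc_val :: "('a::field poly \<Rightarrow> 'g::linordered_ab_group_add) \<Rightarrow> 'a poly \<Rightarrow> 'a poly \<Rightarrow> 'g" where
  "trunc_val v Q f = Min {v (qexp Q f i * Q ^ i) | i. i \<le> Polynomial.degree f \<and> qexp Q f i \<noteq> 0}"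

definition trunc_val_frac :: "('a::field poly \<Rightarrow> 'g::linordered_ab_group_add) \<Rightarrow> 'a poly \<Rightarrow> 'a poly fract \<Rightarrow> 'g" where
  "trunc_val_frac v Q z = (THE w. \<exists>f g. f \<noteq> 0 \<and> g \<noteq> 0 \<and> z = Fract f g \<and> w = trunc_val v Q f - trunc_val v Q g)"

definition val_ring :: "('a::field poly \<Rightarrow> 'g::linordered_ab_group_add) \<Rightarrow> 'a poly \<Rightarrow> 'a poly fract ring" where
  "val_ring v Q = \<lparr>carrier = {z. z = 0 \<or> 0 \<le> trunc_val_frac v Q z},
                   monoid.mult = (*), one = 1, zero = 0, add = (+)\<rparr>"

definition max_ideal :: "('a::field poly \<Rightarrow> 'g::linordered_ab_group_add) \<Rightarrow> 'a poly \<Rightarrow> 'a poly fract set" where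
  "max_ideal v Q = {z. z = 0 \<or> 0 < trunc_val_frac v Q z}"

definition residue_field :: "('a::field poly \<Rightarrow> 'g::linordered_ab_group_add) \<Rightarrow> 'a poly \<Rightarrow> 'a poly fract set ring" where
  "residue_field v Q = val_ring v Q Quot max_ideal v Q"

definition residue :: "('a::field poly \<Rightarrow> 'g::linordered_ab_group_add) \<Rightarrow> 'a poly \<Rightarrow> 'a poly fract \<Rightarrow> 'a poly fract set" where
  "residue v Q z = max_ideal v Q +>\<^bsub>val_ring v Q\<^esub> z"

text \<open>The residue field \<open>K\<nu>\<close> of \<open>\<nu>\<close> on K, viewed inside \<open>K(x)\<nu>_Q\<close> via the natural
  embedding \<open>c\<nu> \<mapsto> c\<nu>_Q\<close> (for constants c, \<open>\<nu>_Q(c) = \<nu>(c)\<close>).\<close>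
definition base_residue_field :: "('a::field poly \<Rightarrow> 'g::linordered_ab_group_add) \<Rightarrow> 'a poly \<Rightarrow> 'a poly fract set set" where
  "base_residue_field v Q = {residue v Q (Fract [:c:] 1) | c. c = 0 \<or> 0 \<le> v [:c:]}"

end

theory Submission
  imports Defs
begin


abbreviation cf :: "'a::zero poly \<Rightarrow> nat \<Rightarrow> 'a" where "cf \<equiv> Polynomial.coeff"
abbreviation dg :: "'a::zero poly \<Rightarrow> nat" where "dg \<equiv> Polynomial.degree"

lemma coeff_hasse: "cf (hasse_deriv b f) k = of_nat ((k+b) choose b) * cf f (k+b)"
proof -
  have "cf (hasse_deriv b f) k = (\<Sum>i\<in>{b..dg f}. if i = k + b then of_nat (i choose b) * cf f i else 0)"
    unfolding hasse_deriv_def coeff_sum coeff_monom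
    by (intro sum.cong refl) auto
  also have "\<dots> = (if k + b \<in> {b..dg f} then of_nat ((k+b) choose b) * cf f (k+b) else 0)"
    by (rule sum.delta) simp
  also have "\<dots> = of_nat ((k+b) choose b) * cf f (k+b)"
    using coeff_eq_0[of f "k+b"] by auto
  finally show ?thesis .
qed

lemma hasse_0[simp]: "hasse_deriv 0 f = f"
  by (simp add: poly_eq_iff coeff_hasse)

lemma hasse_add: "hasse_deriv b (f + g) = hasse_deriv b f + hasse_deriv b g"
  by (simp add: poly_eq_iff coeff_hasse algebra_simps)

lemma hasse_diff: "hasse_deriv b (f - g) = hasse_deriv b f - hasse_deriv b g"
  by (simp add: poly_eq_iff coeff_hasse algebra_simps)

lemma hasse_minus: "hasse_deriv b (- f) = - hasse_deriv b f"
  by (simp add: poly_eq_iff coeff_hasse algebra_simps)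

lemma hasse_zero[simp]: "hasse_deriv b 0 = 0"
  by (simp add: poly_eq_iff coeff_hasse)

lemma hasse_smult: "hasse_deriv b (Polynomial.smult c f) = Polynomial.smult c (hasse_deriv b f)"
  by (simp add: poly_eq_iff coeff_hasse algebra_simps)

lemma hasse_big: "dg f < b \<Longrightarrow> hasse_deriv b f = 0"
  by (simp add: poly_eq_iff coeff_hasse coeff_eq_0)

lemma hasse_const: "b \<ge> 1 \<Longrightarrow> dg f = 0 \<Longrightarrow> hasse_deriv b f = 0"
  by (simp add: hasse_big)

lemma hasse_top: "cf (hasse_deriv (dg f) f) 0 = Polynomial.lead_coeff f"
  by (simp add: coeff_hasse)

lemma hasse_pCons:
  "hasse_deriv b (pCons a f) =
     (if b = 0 then [:a:] else 0) + pCons 0 (hasse_deriv b f) + (if b = 0 then 0 else hasse_deriv (b - 1) f)"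
proof (cases b)
  case 0 then show ?thesis by (simp add: poly_eq_iff coeff_hasse coeff_pCons split: nat.split)
next
  case (Suc c)
  show ?thesis
  proof (rule poly_eqI)
    fix k
    show "cf (hasse_deriv b (pCons a f)) k = cf ((if b = 0 then [:a:] else 0) + pCons 0 (hasse_deriv b f) + (if b = 0 then 0 else hasse_deriv (b - 1) f)) k"
    proof (cases k)
      case 0 then show ?thesis using Suc by (simp add: coeff_hasse coeff_pCons)
    next
      case (Suc k')
      have "(k + b choose b) = (k' + b choose b) + (k' + b choose c)"
        using Suc \<open>b = Suc c\<close> by simp
      then show ?thesis using Suc \<open>b = Suc c\<close>
        by (simp add: coeff_hasse coeff_pCons algebra_simps)
    qed
  qed
qed

definition taylor :: "'a::field poly \<Rightarrow> 'a poly poly" where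
  "taylor f = pcompose (map_poly (\<lambda>c. [:c:]) f) [:[:0,1:], 1:]"

lemma taylor_pCons: "taylor (pCons a f) = [:[:a:]:] + [:[:0,1:], 1:] * taylor f"
  unfolding taylor_def by (simp add: map_poly_pCons pcompose_pCons)

lemma coeff_taylor: "cf (taylor f) b = hasse_deriv b f"
proof (induction f arbitrary: b)
  case 0 then show ?case by (simp add: taylor_def)
next
  case (pCons a f)
  have e: "[:[:0,1:], 1:] * taylor f = Polynomial.smult [:0,1:] (taylor f) + pCons 0 (taylor f)"
    by (simp add: mult_pCons_left)
  have x: "[:0,1:] * p = pCons 0 p" for p :: "'a poly"
    by simp
  show ?case
    unfolding taylor_pCons e hasse_pCons
    by (cases b) (auto simp: pCons.IH coeff_pCons x)
qed

lemma map_const_mult: "map_poly (\<lambda>c. [:c:]) (f * g) = map_poly (\<lambda>c. [:c::'a::field:]) f * map_poly (\<lambda>c. [:c:]) g"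
proof (induction f)
  case 0 then show ?case by simp
next
  case (pCons a f)
  have s: "map_poly (\<lambda>c. [:c:]) (Polynomial.smult a g) = Polynomial.smult [:a:] (map_poly (\<lambda>c. [:c:]) g)"
    by (simp add: poly_eq_iff coeff_map_poly mult.commute)
  have p: "map_poly (\<lambda>c. [:c::'a:]) (p + q) = map_poly (\<lambda>c. [:c:]) p + map_poly (\<lambda>c. [:c:]) q" for p q
    by (simp add: poly_eq_iff coeff_map_poly)
  show ?case
    by (simp add: mult_pCons_left map_poly_pCons p s pCons.IH)
qed

lemma taylor_mult: "taylor (f * g) = taylor f * taylor g"
  unfolding taylor_def map_const_mult pcompose_mult ..

lemma hasse_mult: "hasse_deriv b (f * g) = (\<Sum>i\<le>b. hasse_deriv i f * hasse_deriv (b - i) g)"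
  using arg_cong[OF taylor_mult[of f g], of "\<lambda>p. cf p b"]
  by (simp add: coeff_taylor coeff_mult)


lemma nmul_add_nat: "nmul (a + b) x = nmul a x + nmul b (x::'g::linordered_ab_group_add)"
  by (induction a) (simp_all add: add.assoc)

lemma nmul_distrib: "nmul n (x + y) = nmul n x + nmul n (y::'g::linordered_ab_group_add)"
  by (induction n) (simp_all add: algebra_simps)

lemma nmul_zero[simp]: "nmul n (0::'g::linordered_ab_group_add) = 0"
  by (induction n) simp_all

lemma nmul_minus: "nmul n (- x) = - nmul n (x::'g::linordered_ab_group_add)"
  by (induction n) (simp_all add: algebra_simps)

lemma nmul_diff: "nmul n (x - y) = nmul n x - nmul n (y::'g::linordered_ab_group_add)"
  using nmul_distrib[of n x "-y"] by (simp add: nmul_minus)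

lemma nmul_mult: "nmul (a * b) x = nmul a (nmul b (x::'g::linordered_ab_group_add))"
  by (induction a) (simp_all add: nmul_add_nat nmul_distrib)

lemma nmul_comm: "nmul a (nmul b x) = nmul b (nmul a (x::'g::linordered_ab_group_add))"
  by (metis mult.commute nmul_mult)

lemma nmul_one[simp]: "nmul 1 x = x"
  by simp

lemma nmul_mono: "x \<le> y \<Longrightarrow> nmul n x \<le> nmul n (y::'g::linordered_ab_group_add)"
  by (induction n) (simp_all add: add_mono)

lemma nmul_strict: "x < y \<Longrightarrow> n \<ge> 1 \<Longrightarrow> nmul n x < nmul n (y::'g::linordered_ab_group_add)"
proof (induction n)
  case 0 then show ?case by simp
next
  case (Suc n)
  show ?case using nmul_mono[OF less_imp_le[OF Suc.prems(1)], of n] Suc.prems(1)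
    by (simp add: add_less_le_mono)
qed

lemma nmul_le_cancel: "nmul n x \<le> nmul n y \<Longrightarrow> n \<ge> 1 \<Longrightarrow> x \<le> (y::'g::linordered_ab_group_add)"
  using nmul_strict[of y x n] by (meson not_le)

lemma nmul_less_cancel: "nmul n x < nmul n y \<Longrightarrow> x < (y::'g::linordered_ab_group_add)"
  using nmul_mono[of y x n] by (meson not_le)

lemma nmul_nonneg: "0 \<le> x \<Longrightarrow> 0 \<le> nmul n (x::'g::linordered_ab_group_add)"
  using nmul_mono[of 0 x n] by simp

lemma finite_max_rel:
  assumes "finite S" "S \<noteq> {}"
    and tot: "\<forall>x\<in>S. \<forall>y\<in>S. R x y \<or> R y x"
    and tr: "\<forall>x\<in>S. \<forall>y\<in>S. \<forall>z\<in>S. R x y \<longrightarrow> R y z \<longrightarrow> R x z"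
  shows "\<exists>m\<in>S. \<forall>c\<in>S. R c m"
  using assms(1,2) tot tr
proof (induction S rule: finite_ne_induct)
  case (singleton x)
  then have "R x x" by blast
  then show ?case by blast
next
  case (insert x F)
  have t1: "\<forall>a\<in>F. \<forall>b\<in>F. R a b \<or> R b a" using insert.prems(1) by blast
  have t2: "\<forall>a\<in>F. \<forall>b\<in>F. \<forall>c\<in>F. R a b \<longrightarrow> R b c \<longrightarrow> R a c" using insert.prems(2) by blast
  obtain m where m: "m \<in> F" "\<forall>c\<in>F. R c m" using insert.IH[OF t1 t2] by blast
  show ?case
  proof (cases "R x m")
    case True then show ?thesis using m by blast
  next
    case False
    then have xm: "R m x" using insert.prems(1) m(1) by blast
    have "R c x" if c: "c \<in> insert x F" for c
    proof (cases "c = x")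
      case True then show ?thesis using insert.prems(1) by blast
    next
      case False
      then have cF: "c \<in> F" using c by blast
      then have "R c m" using m by blast
      then show ?thesis using insert.prems(2) cF m(1) xm by blast
    qed
    then show ?thesis by blast
  qed
qed

locale kval =
  fixes v :: "'a::field poly \<Rightarrow> 'g::linordered_ab_group_add"
  assumes kv: "krull_valuation v"
begin

lemma vmult: "f \<noteq> 0 \<Longrightarrow> g \<noteq> 0 \<Longrightarrow> v (f * g) = v f + v g"
  using kv unfolding krull_valuation_def by blast

lemma vadd: "f \<noteq> 0 \<Longrightarrow> g \<noteq> 0 \<Longrightarrow> f + g \<noteq> 0 \<Longrightarrow> min (v f) (v g) \<le> v (f + g)"
  using kv unfolding krull_valuation_def by blast

lemma v1[simp]: "v 1 = 0"
  using vmult[of 1 1] by simp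

lemma vm1[simp]: "v (-1) = 0"
proof -
  have "v (-1) + v (-1) = 0" using vmult[of "-1" "-1"] by simp
  then show ?thesis
  proof (cases "v (-1)" "0::'g" rule: linorder_cases)
    case less then have "v (-1) + v (-1) < 0" by (simp add: add_neg_neg)
    then show ?thesis using \<open>v (-1) + v (-1) = 0\<close> by simp
  next
    case greater then have "v (-1) + v (-1) > 0" by (simp add: add_pos_pos)
    then show ?thesis using \<open>v (-1) + v (-1) = 0\<close> by simp
  qed
qed

lemma vuminus[simp]: "v (- f) = v f"
proof (cases "f = 0")
  case True then show ?thesis by simp
next
  case False
  have "- f = (-1) * f" by simp
  then show ?thesis using vmult[of "-1" f] False by simp
qed

lemma vpow: "f \<noteq> 0 \<Longrightarrow> v (f ^ k) = nmul k (v f)"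
  by (induction k) (simp_all add: vmult)

definition ge :: "'g \<Rightarrow> 'a poly \<Rightarrow> bool" where "ge \<gamma> y \<longleftrightarrow> y = 0 \<or> \<gamma> \<le> v y"
definition gt :: "'g \<Rightarrow> 'a poly \<Rightarrow> bool" where "gt \<gamma> y \<longleftrightarrow> y = 0 \<or> \<gamma> < v y"

lemma ge_add: "ge \<gamma> x \<Longrightarrow> ge \<gamma> y \<Longrightarrow> ge \<gamma> (x + y)"
proof -
  assume a: "ge \<gamma> x" "ge \<gamma> y"
  show ?thesis
  proof (cases "x = 0 \<or> y = 0 \<or> x + y = 0")
    case True then show ?thesis using a unfolding ge_def by auto
  next
    case False
    then have "min (v x) (v y) \<le> v (x + y)" using vadd by blast
    moreover have "\<gamma> \<le> min (v x) (v y)" using a False unfolding ge_def by simp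
    ultimately show ?thesis unfolding ge_def by (blast intro: order_trans)
  qed
qed

lemma gt_add: "gt \<gamma> x \<Longrightarrow> gt \<gamma> y \<Longrightarrow> gt \<gamma> (x + y)"
proof -
  assume a: "gt \<gamma> x" "gt \<gamma> y"
  show ?thesis
  proof (cases "x = 0 \<or> y = 0 \<or> x + y = 0")
    case True then show ?thesis using a unfolding gt_def by auto
  next
    case False
    then have "min (v x) (v y) \<le> v (x + y)" using vadd by blast
    moreover have "\<gamma> < min (v x) (v y)" using a False unfolding gt_def by simp
    ultimately show ?thesis unfolding gt_def by (blast intro: less_le_trans)
  qed
qed

lemma ge_0[simp]: "ge \<gamma> 0" by (simp add: ge_def)
lemma gt_0[simp]: "gt \<gamma> 0" by (simp add: gt_def)

lemma ge_uminus: "ge \<gamma> x \<Longrightarrow> ge \<gamma> (- x)"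
  unfolding ge_def by auto

lemma gt_uminus: "gt \<gamma> x \<Longrightarrow> gt \<gamma> (- x)"
  unfolding gt_def by auto

lemma ge_diff: "ge \<gamma> x \<Longrightarrow> ge \<gamma> y \<Longrightarrow> ge \<gamma> (x - y)"
  using ge_add[of \<gamma> x "-y"] ge_uminus[of \<gamma> y] by simp

lemma gt_diff: "gt \<gamma> x \<Longrightarrow> gt \<gamma> y \<Longrightarrow> gt \<gamma> (x - y)"
  using gt_add[of \<gamma> x "-y"] gt_uminus[of \<gamma> y] by simp

lemma ge_sum: "(\<And>i. i \<in> A \<Longrightarrow> ge \<gamma> (F i)) \<Longrightarrow> ge \<gamma> (sum F A)"
  by (induction A rule: infinite_finite_induct) (auto intro: ge_add)

lemma gt_sum: "(\<And>i. i \<in> A \<Longrightarrow> gt \<gamma> (F i)) \<Longrightarrow> gt \<gamma> (sum F A)"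
  by (induction A rule: infinite_finite_induct) (auto intro: gt_add)

lemma gt_imp_ge: "gt \<gamma> x \<Longrightarrow> ge \<gamma> x"
  unfolding gt_def ge_def by auto

lemma dominant:
  assumes "x \<noteq> 0" "gt (v x) y"
  shows "x + y \<noteq> 0 \<and> v (x + y) = v x"
proof (cases "y = 0")
  case True then show ?thesis using assms by simp
next
  case False
  then have lt: "v x < v y" using assms unfolding gt_def by auto
  have ne: "x + y \<noteq> 0"
  proof
    assume "x + y = 0" then have "y = - x" by (simp add: eq_neg_iff_add_eq_0 add.commute)
    then show False using lt by simp
  qed
  have "min (v x) (v y) \<le> v (x + y)" using vadd[OF assms(1) False ne] .
  then have le: "v x \<le> v (x + y)" using lt by simp
  have "x = (x + y) + (- y)" by simp
  then have "min (v (x + y)) (v (-y)) \<le> v x"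
    using vadd[of "x + y" "-y"] ne False assms(1) by (metis neg_equal_0_iff_equal)
  then have "v (x + y) \<le> v x" using lt by (simp add: min_def split: if_splits)
  then show ?thesis using le ne by simp
qed

lemma dominant_diff:
  assumes "x \<noteq> 0" "gt (v x) y"
  shows "y - x \<noteq> 0 \<and> v (y - x) = v x"
  using dominant[of "-x" "y"] assms by (simp add: gt_def)

end


locale keyp = kval v for v :: "'a::field poly \<Rightarrow> 'g::linordered_ab_group_add" +
  fixes Q :: "'a poly"
  assumes key: "key_polynomial v Q"
    and degQ: "dg Q \<ge> 1"
begin

abbreviation "n \<equiv> dg Q"

lemma Q_monic: "Polynomial.lead_coeff Q = 1"
  using key unfolding key_polynomial_def by auto

lemma Q_ne0[simp]: "Q \<noteq> 0"
  using degQ by auto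

definition dQ :: "nat \<Rightarrow> 'g" where "dQ c = v Q - v (hasse_deriv c Q)"

definition SQ :: "nat set" where "SQ = {c \<in> {1..n}. hasse_deriv c Q \<noteq> 0}"

definition RQ :: "nat \<Rightarrow> nat \<Rightarrow> bool" where "RQ c m \<longleftrightarrow> nmul m (dQ c) \<le> nmul c (dQ m)"

lemma SQ_ne: "n \<in> SQ"
proof -
  have "Polynomial.coeff (hasse_deriv n Q) 0 = 1" using hasse_top[of Q] Q_monic by simp
  then have "hasse_deriv n Q \<noteq> 0" by auto
  then show ?thesis using degQ unfolding SQ_def by auto
qed

lemma exists_B: "\<exists>m\<in>SQ. \<forall>c\<in>SQ. RQ c m"
proof (rule finite_max_rel)
  show "finite SQ" unfolding SQ_def by simp
  show "SQ \<noteq> {}" using SQ_ne by auto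
  show "\<forall>x\<in>SQ. \<forall>y\<in>SQ. RQ x y \<or> RQ y x" unfolding RQ_def by auto
  show "\<forall>x\<in>SQ. \<forall>y\<in>SQ. \<forall>z\<in>SQ. RQ x y \<longrightarrow> RQ y z \<longrightarrow> RQ x z"
  proof (intro ballI impI)
  fix x y z assume xyz: "x \<in> SQ" "y \<in> SQ" "z \<in> SQ" and r: "RQ x y" "RQ y z"
  have y1: "y \<ge> 1" using xyz unfolding SQ_def by auto
  have "nmul y (nmul z (dQ x)) = nmul z (nmul y (dQ x))" by (rule nmul_comm)
  also have "\<dots> \<le> nmul z (nmul x (dQ y))" using r(1) unfolding RQ_def by (rule nmul_mono)
  also have "\<dots> = nmul x (nmul z (dQ y))" by (rule nmul_comm)
  also have "\<dots> \<le> nmul x (nmul y (dQ z))" using r(2) unfolding RQ_def by (rule nmul_mono)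
  also have "\<dots> = nmul y (nmul x (dQ z))" by (rule nmul_comm)
  finally show "RQ x z" unfolding RQ_def using y1 by (rule nmul_le_cancel)
  qed
qed

definition B :: nat where "B = (SOME m. m \<in> SQ \<and> (\<forall>c\<in>SQ. RQ c m))"

lemma B_prop: "B \<in> SQ" "\<And>c. c \<in> SQ \<Longrightarrow> RQ c B"
  using someI_ex[OF exists_B[unfolded Bex_def]] unfolding B_def[symmetric] by auto

lemma B_ge1: "B \<ge> 1" and B_le: "B \<le> n" and hB_ne: "hasse_deriv B Q \<noteq> 0"
  using B_prop(1) unfolding SQ_def by auto

definition E :: 'g where "E = dQ B"

lemma Q_prop: "hasse_deriv c Q \<noteq> 0 \<Longrightarrow> nmul B (v Q - v (hasse_deriv c Q)) \<le> nmul c E"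
proof (cases "c = 0")
  case True then show ?thesis by simp
next
  case False
  assume h: "hasse_deriv c Q \<noteq> 0"
  then have "c \<le> n" using hasse_big[of Q c] by (meson not_le)
  then have "c \<in> SQ" using False h unfolding SQ_def by auto
  then show ?thesis using B_prop(2)[of c] unfolding RQ_def E_def dQ_def by simp
qed

definition small :: "'a poly \<Rightarrow> bool" where
  "small f \<longleftrightarrow> (\<forall>b\<ge>1. hasse_deriv b f \<noteq> 0 \<longrightarrow> nmul B (v f - v (hasse_deriv b f)) < nmul b E)"

lemma small_deg:
  assumes f: "f \<noteq> 0" "dg f < n"
  shows "small f"
  unfolding small_def
proof (intro allI impI)
  fix b :: nat assume b: "b \<ge> 1" "hasse_deriv b f \<noteq> 0"
  have ne: "\<not> eps_ge v f Q" using key f unfolding key_polynomial_def by (meson not_le)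
  have bf: "b \<le> dg f" using b hasse_big[of f b] by (meson not_le)
  with b ne obtain c where c: "c \<in> {1..n}" "hasse_deriv c Q \<noteq> 0"
     "\<not> nmul b (v Q - v (hasse_deriv c Q)) \<le> nmul c (v f - v (hasse_deriv b f))"
    unfolding eps_ge_def using degQ by auto
  have c1: "c \<ge> 1" using c by auto
  have lt: "nmul c (v f - v (hasse_deriv b f)) < nmul b (dQ c)" using c(3) unfolding dQ_def by simp
  have "c \<in> SQ" using c unfolding SQ_def by auto
  then have r: "nmul B (dQ c) \<le> nmul c E" using B_prop(2)[of c] unfolding RQ_def E_def by simp
  have "nmul c (nmul B (v f - v (hasse_deriv b f))) = nmul B (nmul c (v f - v (hasse_deriv b f)))"
    by (rule nmul_comm)
  also have "\<dots> < nmul B (nmul b (dQ c))" using lt B_ge1 by (rule nmul_strict)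
  also have "\<dots> = nmul b (nmul B (dQ c))" by (rule nmul_comm)
  also have "\<dots> \<le> nmul b (nmul c E)" using r by (rule nmul_mono)
  also have "\<dots> = nmul c (nmul b E)" by (rule nmul_comm)
  finally show "nmul B (v f - v (hasse_deriv b f)) < nmul b E" by (rule nmul_less_cancel)
qed

lemma small_weak:
  assumes "small f" "hasse_deriv i f \<noteq> 0"
  shows "nmul B (v f - v (hasse_deriv i f)) \<le> nmul i E"
  using assms unfolding small_def by (cases "i = 0") (auto intro: less_imp_le)

lemma small_mult:
  assumes f: "f \<noteq> 0" "small f" and g: "g \<noteq> 0" "small g"
  shows "small (f * g)"
  unfolding small_def
proof (intro allI impI)
  fix b :: nat assume b: "b \<ge> 1" "hasse_deriv b (f * g) \<noteq> 0"
  define P where "P y \<longleftrightarrow> y = 0 \<or> nmul B (v f + v g) < nmul B (v y) + nmul b E" for y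
  have Padd: "P (x + y)" if "P x" "P y" for x y
  proof -
    consider "x = 0" | "y = 0" | "x + y = 0" | "x \<noteq> 0" "y \<noteq> 0" "x + y \<noteq> 0" by blast
    then show ?thesis
    proof cases
      case 4
      have m: "min (v x) (v y) \<le> v (x + y)" using vadd 4 by blast
      have "nmul B (min (v x) (v y)) \<le> nmul B (v (x + y))" using m by (rule nmul_mono)
      moreover have "nmul B (v f + v g) < nmul B (min (v x) (v y)) + nmul b E"
        using that 4 unfolding P_def by (cases "v x \<le> v y") (auto simp: min_def)
      ultimately show ?thesis unfolding P_def by (meson add_le_cancel_right order_less_le_trans)
    qed (use that in \<open>auto simp: P_def\<close>)
  qed
  have Psum: "P (sum F A)" if "\<And>i. i \<in> A \<Longrightarrow> P (F i)" for F :: "nat \<Rightarrow> 'a poly" and A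
    using that
  proof (induction A rule: infinite_finite_induct)
    case (insert x F')
    then show ?case by (simp add: Padd)
  qed (auto simp: P_def)
  have "P (hasse_deriv i f * hasse_deriv (b - i) g)" if i: "i \<le> b" for i
  proof (cases "hasse_deriv i f = 0 \<or> hasse_deriv (b - i) g = 0")
    case True then show ?thesis unfolding P_def by auto
  next
    case False
    then have nz: "hasse_deriv i f \<noteq> 0" "hasse_deriv (b - i) g \<noteq> 0" by auto
    have "nmul B (v f - v (hasse_deriv i f)) + nmul B (v g - v (hasse_deriv (b - i) g)) < nmul i E + nmul (b - i) E"
    proof (cases "i = 0")
      case True
      then have "nmul B (v g - v (hasse_deriv (b - i) g)) < nmul (b - i) E"
        using g(2) nz b unfolding small_def by auto
      then show ?thesis using True by simp
    next
      case False
      then have "nmul B (v f - v (hasse_deriv i f)) < nmul i E"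
        using f(2) nz unfolding small_def by auto
      moreover have "nmul B (v g - v (hasse_deriv (b - i) g)) \<le> nmul (b - i) E"
        using small_weak[OF g(2) nz(2)] .
      ultimately show ?thesis by (rule add_less_le_mono)
    qed
    also have "\<dots> = nmul b E" using i nmul_add_nat[of i "b - i" E] by simp
    finally have "nmul B (v f - v (hasse_deriv i f)) + nmul B (v g - v (hasse_deriv (b - i) g)) < nmul b E" .
    then have "nmul B (v f + v g) < nmul B (v (hasse_deriv i f) + v (hasse_deriv (b - i) g)) + nmul b E"
      by (simp add: nmul_diff nmul_distrib algebra_simps)
    then show ?thesis unfolding P_def using vmult[OF nz] by simp
  qed
  then have "P (hasse_deriv b (f * g))" unfolding hasse_mult by (intro Psum) auto
  then have "nmul B (v f + v g) < nmul B (v (hasse_deriv b (f * g))) + nmul b E"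
    using b(2) unfolding P_def by auto
  then show "nmul B (v (f * g) - v (hasse_deriv b (f * g))) < nmul b E"
    using vmult[OF f(1) g(1)] by (simp add: nmul_diff nmul_distrib algebra_simps)
qed

end


context keyp begin

lemma small_cancel:
  assumes "small f" "hasse_deriv B f \<noteq> 0"
  shows "v f < v (hasse_deriv B f) + E"
proof -
  have "nmul B (v f - v (hasse_deriv B f)) < nmul B E" using assms B_ge1 unfolding small_def by auto
  then have "v f - v (hasse_deriv B f) < E" by (rule nmul_less_cancel)
  then show ?thesis by (simp add: algebra_simps)
qed

lemma deg_div_lt:
  assumes "dg p < 2 * n - 1" "p div Q \<noteq> 0"
  shows "dg (p div Q) < n"
proof -
  have "p = p div Q * Q + p mod Q" by simp
  have d: "dg (p div Q * Q) = dg (p div Q) + n" using assms(2) by (simp add: degree_mult_eq)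
  have "dg (p mod Q) < n \<or> p mod Q = 0" using degree_mod_less[of Q p] by auto
  then have "dg (p div Q * Q) \<le> max (dg p) (dg (p mod Q))"
    by (metis degree_diff_le_max \<open>p = p div Q * Q + p mod Q\<close> add_diff_cancel_right')
  then show ?thesis using d assms(1) degree_mod_less[of Q p] degQ by (auto simp: max_def split: if_splits)
qed

theorem key_lemma:
  assumes f: "f \<noteq> 0" "dg f < n" and g: "g \<noteq> 0" "dg g < n"
  shows "(f * g) mod Q \<noteq> 0 \<and> v ((f * g) mod Q) = v (f * g) \<and>
         ((f * g) div Q = 0 \<or> v (f * g) < v ((f * g) div Q * Q))"
proof -
  define p where "p = f * g"
  define a where "a = p div Q"
  define r where "r = p mod Q"
  have pne: "p \<noteq> 0" using f g unfolding p_def by simp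
  have par: "p = a * Q + r" unfolding a_def r_def by simp
  have dp: "dg p < 2 * n - 1" unfolding p_def using f g degree_mult_le[of f g] by linarith
  have dr: "r = 0 \<or> dg r < n" unfolding r_def using degree_mod_less[of Q p] by auto
  have main: "a = 0 \<or> v p < v (a * Q)"
  proof (rule ccontr)
    assume "\<not> ?thesis"
    then have ane: "a \<noteq> 0" and mu: "v (a * Q) \<le> v p" by auto
    define \<mu> where "\<mu> = v (a * Q)"
    have vaQ: "\<mu> = v a + v Q" unfolding \<mu>_def using vmult ane by simp
    have da: "dg a < n" using deg_div_lt[OF dp] ane unfolding a_def by simp
    have sa: "small a" using small_deg[OF ane da] .
    have sp: "small p" unfolding p_def using small_mult[OF f(1) small_deg[OF f] g(1) small_deg[OF g]] .
    define P where "P y \<longleftrightarrow> gt (\<mu> - E) y" for y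
    obtain B' where BB: "B = Suc B'" using B_ge1 by (cases B) auto
    define T where "T = (\<Sum>i\<le>B'. hasse_deriv (Suc i) a * hasse_deriv (B - Suc i) Q)"
    have hBaQ: "hasse_deriv B (a * Q) = a * hasse_deriv B Q + T"
      unfolding hasse_mult T_def BB sum.atMost_Suc_shift by simp
    have PT: "P T" unfolding T_def P_def
    proof (rule gt_sum)
      fix i assume "i \<in> {..B'}"
      then have i: "Suc i \<le> B" using BB by auto
      show "gt (\<mu> - E) (hasse_deriv (Suc i) a * hasse_deriv (B - Suc i) Q)"
      proof (cases "hasse_deriv (Suc i) a = 0 \<or> hasse_deriv (B - Suc i) Q = 0")
        case True then show ?thesis by (auto simp: gt_def)
      next
        case False
        then have nz: "hasse_deriv (Suc i) a \<noteq> 0" "hasse_deriv (B - Suc i) Q \<noteq> 0" by auto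
        have s1: "nmul B (v a - v (hasse_deriv (Suc i) a)) < nmul (Suc i) E"
          using sa nz(1) unfolding small_def by auto
        have s2: "nmul B (v Q - v (hasse_deriv (B - Suc i) Q)) \<le> nmul (B - Suc i) E"
          using Q_prop[OF nz(2)] .
        have "nmul B (v a - v (hasse_deriv (Suc i) a)) + nmul B (v Q - v (hasse_deriv (B - Suc i) Q))
              < nmul (Suc i) E + nmul (B - Suc i) E" using s1 s2 by (rule add_less_le_mono)
        also have "\<dots> = nmul B E" using i nmul_add_nat[of "Suc i" "B - Suc i" E] by simp
        finally have "nmul B ((v a + v Q) - (v (hasse_deriv (Suc i) a) + v (hasse_deriv (B - Suc i) Q))) < nmul B E"
          by (simp add: nmul_diff nmul_distrib algebra_simps)
        then have "(v a + v Q) - (v (hasse_deriv (Suc i) a) + v (hasse_deriv (B - Suc i) Q)) < E"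
          by (rule nmul_less_cancel)
        then show ?thesis unfolding gt_def using vmult[OF nz] vaQ by (simp add: algebra_simps)
      qed
    qed
    have Pp: "P (hasse_deriv B p)"
    proof (cases "hasse_deriv B p = 0")
      case True then show ?thesis by (simp add: P_def)
    next
      case False
      have "v p < v (hasse_deriv B p) + E" using small_cancel[OF sp False] .
      then have "\<mu> < v (hasse_deriv B p) + E" using mu unfolding \<mu>_def[symmetric] by simp
      then show ?thesis unfolding P_def gt_def by (simp add: algebra_simps)
    qed
    define Y where "Y = hasse_deriv B p - T"
    have PY: "P Y" unfolding Y_def P_def using Pp PT unfolding P_def by (rule gt_diff)
    have vaq: "v (a * hasse_deriv B Q) = \<mu> - E"
      using vmult[OF ane hB_ne] vaQ unfolding E_def dQ_def by (simp add: algebra_simps)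
    have hr: "hasse_deriv B r = Y - a * hasse_deriv B Q"
      using arg_cong[OF par, of "hasse_deriv B"] unfolding Y_def hasse_add hBaQ
      by (simp add: algebra_simps)
    have "Y - a * hasse_deriv B Q \<noteq> 0 \<and> v (Y - a * hasse_deriv B Q) = v (a * hasse_deriv B Q)"
      by (rule dominant_diff) (use ane hB_ne PY vaq in \<open>auto simp: P_def\<close>)
    then have hrne: "hasse_deriv B r \<noteq> 0" and vhr: "v (hasse_deriv B r) = \<mu> - E"
      using hr vaq by auto
    have rne: "r \<noteq> 0" using hrne by auto
    have "v r < \<mu>" using small_cancel[OF small_deg[OF rne] hrne] dr rne vhr by simp
    moreover have "\<mu> \<le> v r"
    proof -
      have "r = p + (- (a * Q))" using par by simp
      moreover have "- (a * Q) \<noteq> 0" using ane by simp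
      ultimately have "min (v p) (v (- (a * Q))) \<le> v r" using vadd[OF pne, of "- (a * Q)"] rne by simp
      then show ?thesis using mu unfolding \<mu>_def by simp
    qed
    ultimately show False by simp
  qed
  show ?thesis
  proof (cases "a = 0")
    case True
    then have "r = p" using par by simp
    then show ?thesis using pne True unfolding p_def r_def a_def by simp
  next
    case False
    then have lt: "v p < v (a * Q)" using main by simp
    have "r = p + (- (a * Q))" using par by simp
    moreover have "p + (- (a * Q)) \<noteq> 0 \<and> v (p + (- (a * Q))) = v p"
      by (rule dominant) (use pne lt in \<open>auto simp: gt_def\<close>)
    ultimately show ?thesis using lt unfolding p_def r_def a_def by simp
  qed
qed

end


context keyp begin

abbreviation qx where "qx \<equiv> qexp Q"

lemma qexp_add: "qx (f + g) i = qx f i + qx g i"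
  unfolding qexp_def by (simp add: poly_div_add_left poly_mod_add_left)

lemma qexp_minus: "qx (- f) i = - qx f i"
  unfolding qexp_def by (simp add: poly_div_minus_left poly_mod_minus_left)

lemma qexp_diff: "qx (f - g) i = qx f i - qx g i"
  unfolding qexp_def by (simp add: poly_div_diff_left poly_mod_diff_left)

lemma qexp_0[simp]: "qx 0 i = 0"
  unfolding qexp_def by simp

lemma qexp_sum: "qx (sum F A) i = (\<Sum>a\<in>A. qx (F a) i)"
  by (induction A rule: infinite_finite_induct) (simp_all add: qexp_add)

lemma qexp_smult: "qx (Polynomial.smult c f) i = Polynomial.smult c (qx f i)"
  unfolding qexp_def by (simp add: div_smult_left mod_smult_left)

lemma deg_Qpow: "dg (Q ^ i) = i * n"
  by (simp add: degree_power_eq)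

lemma qexp_shift: "qx (f * Q ^ j) i = (if i < j then 0 else qx f (i - j))"
proof (cases "i < j")
  case True
  have e: "f * Q ^ j = (f * Q ^ (j - i)) * Q ^ i"
    using True by (simp add: mult.assoc power_add[symmetric])
  have d: "(f * Q ^ j) div Q ^ i = f * Q ^ (j - i)"
    unfolding e by simp
  have "Q ^ (j - i) = Q * Q ^ (j - i - 1)" using True
    by (metis Suc_diff_Suc diff_Suc_1 minus_nat.diff_0 power_Suc zero_less_diff)
  then have "(f * Q ^ (j - i)) mod Q = 0" by (simp add: mult.left_commute)
  then show ?thesis using True unfolding qexp_def d by simp
next
  case False
  have "Q ^ i = Q ^ (i - j) * Q ^ j" using False by (simp add: power_add[symmetric])
  then have "(f * Q ^ j) div Q ^ i = f div Q ^ (i - j)"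
    by (simp add: div_mult_mult2)
  then show ?thesis using False unfolding qexp_def by simp
qed

lemma qexp_low: "dg f < n \<Longrightarrow> qx f i = (if i = 0 then f else 0)"
proof (cases "i = 0")
  case True
  assume "dg f < n" then show ?thesis using True unfolding qexp_def by (simp add: mod_poly_less)
next
  case False
  assume "dg f < n"
  then have "dg f < dg (Q ^ i)" unfolding deg_Qpow using False by (simp add: less_le_trans)
  then show ?thesis using False unfolding qexp_def by (simp add: div_poly_less)
qed

lemma qexp_big: "dg f < i \<Longrightarrow> qx f i = 0"
proof -
  assume "dg f < i"
  then have "dg f < dg (Q ^ i)" unfolding deg_Qpow using degQ
    by (metis le_trans less_le_not_le mult_le_mono2 mult.right_neutral not_le)
  then show ?thesis unfolding qexp_def by (simp add: div_poly_less)
qed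

lemma qexp_deg: "qx f i = 0 \<or> dg (qx f i) < n"
  unfolding qexp_def using degree_mod_less[of Q] by auto

lemma expansion_aux: "f = (\<Sum>i<N. qx f i * Q ^ i) + (f div Q ^ N) * Q ^ N"
proof (induction N)
  case 0 then show ?case by simp
next
  case (Suc N)
  have d: "f div Q ^ Suc N = f div Q ^ N div Q" by (simp only: power_Suc2 poly_div_mult_right)
  have e: "f div Q ^ N = qx f N + (f div Q ^ Suc N) * Q"
    unfolding qexp_def d by simp
  have "f = (\<Sum>i<N. qx f i * Q ^ i) + (qx f N + (f div Q ^ Suc N) * Q) * Q ^ N"
    using Suc.IH e by simp
  also have "\<dots> = (\<Sum>i<Suc N. qx f i * Q ^ i) + (f div Q ^ Suc N) * Q ^ Suc N"
    by (simp add: algebra_simps power_Suc2)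
  finally show ?case .
qed

lemma expansion: "f = (\<Sum>i\<le>dg f. qx f i * Q ^ i)"
proof -
  have "dg (Q ^ Suc (dg f)) = Suc (dg f) * n" by (rule deg_Qpow)
  also have "\<dots> \<ge> Suc (dg f) * 1" using degQ by (intro mult_le_mono2)
  finally have "dg (Q ^ Suc (dg f)) \<ge> Suc (dg f)" by simp
  then have "f div Q ^ Suc (dg f) = 0"
    by (intro div_poly_less) simp
  then show ?thesis using expansion_aux[of f "Suc (dg f)"] by (simp add: lessThan_Suc_atMost)
qed

abbreviation tv where "tv \<equiv> trunc_val v Q"

definition IX :: "'a poly \<Rightarrow> nat set" where "IX f = {i. i \<le> dg f \<and> qx f i \<noteq> 0}"

lemma IX_ne: "f \<noteq> 0 \<Longrightarrow> IX f \<noteq> {}"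
proof (rule ccontr)
  assume "f \<noteq> 0" "\<not> IX f \<noteq> {}"
  then have "\<forall>i\<le>dg f. qx f i = 0" unfolding IX_def by auto
  then have "f = 0" using expansion[of f] by simp
  then show False using \<open>f \<noteq> 0\<close> by simp
qed

lemma tv_eq: "tv f = Min ((\<lambda>i. v (qx f i * Q ^ i)) ` IX f)"
  unfolding trunc_val_def IX_def by (rule arg_cong[where f = Min]) auto

lemma tv_le: "qx f i \<noteq> 0 \<Longrightarrow> tv f \<le> v (qx f i * Q ^ i)"
proof -
  assume h: "qx f i \<noteq> 0"
  then have "i \<le> dg f" using qexp_big[of f i] by (meson not_le)
  then have "i \<in> IX f" using h unfolding IX_def by auto
  then show ?thesis unfolding tv_eq by (intro Min_le) (auto simp: IX_def)
qed

lemma tv_attained: "f \<noteq> 0 \<Longrightarrow> \<exists>i. qx f i \<noteq> 0 \<and> tv f = v (qx f i * Q ^ i)"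
proof -
  assume "f \<noteq> 0"
  moreover have "finite (IX f)" unfolding IX_def by simp
  ultimately have "tv f \<in> (\<lambda>i. v (qx f i * Q ^ i)) ` IX f" unfolding tv_eq
    using IX_ne[of f] by (intro Min_in) auto
  then show ?thesis unfolding IX_def by auto
qed

definition geQ :: "'g \<Rightarrow> 'a poly \<Rightarrow> bool" where "geQ \<gamma> f \<longleftrightarrow> (\<forall>i. ge \<gamma> (qx f i * Q ^ i))"

lemma geQ_tv: "geQ (tv f) f"
  unfolding geQ_def ge_def using tv_le by auto

lemma tv_geI: "f \<noteq> 0 \<Longrightarrow> geQ \<gamma> f \<Longrightarrow> \<gamma> \<le> tv f"
  using tv_attained[of f] unfolding geQ_def ge_def by force

lemma geQ_add: "geQ \<gamma> f \<Longrightarrow> geQ \<gamma> g \<Longrightarrow> geQ \<gamma> (f + g)"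
  unfolding geQ_def qexp_add by (simp add: distrib_right ge_add)

lemma geQ_uminus: "geQ \<gamma> f \<Longrightarrow> geQ \<gamma> (- f)"
  unfolding geQ_def qexp_minus by (simp add: ge_uminus)

lemma geQ_0[simp]: "geQ \<gamma> 0" unfolding geQ_def by simp

lemma geQ_sum: "(\<And>a. a \<in> A \<Longrightarrow> geQ \<gamma> (F a)) \<Longrightarrow> geQ \<gamma> (sum F A)"
proof (induction A rule: infinite_finite_induct)
  case (insert x F')
  then show ?case by (simp add: geQ_add)
qed simp_all

lemma geQ_mono: "geQ \<gamma> f \<Longrightarrow> \<delta> \<le> \<gamma> \<Longrightarrow> geQ \<delta> f"
  unfolding geQ_def ge_def by (meson order_trans)

lemma tv_add: "f \<noteq> 0 \<Longrightarrow> g \<noteq> 0 \<Longrightarrow> f + g \<noteq> 0 \<Longrightarrow> min (tv f) (tv g) \<le> tv (f + g)"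
  by (intro tv_geI geQ_add) (auto intro: geQ_mono[OF geQ_tv])

lemma tv_uminus: "tv (- f) = tv f"
  unfolding trunc_val_def qexp_minus by simp

lemma vQpow: "v (x * Q ^ j) = v x + v (Q ^ j)" if "x \<noteq> 0"
  using vmult[OF that] by simp

lemma tv_low: "f \<noteq> 0 \<Longrightarrow> dg f < n \<Longrightarrow> tv f = v f"
proof -
  assume f: "f \<noteq> 0" "dg f < n"
  have "geQ (v f) f" unfolding geQ_def ge_def using f by (simp add: qexp_low)
  then have "v f \<le> tv f" using tv_geI f by blast
  moreover have "tv f \<le> v f" using tv_le[of f 0] f by (simp add: qexp_low)
  ultimately show ?thesis by simp
qed

lemma tv_shift: "f \<noteq> 0 \<Longrightarrow> tv (f * Q ^ j) = tv f + v (Q ^ j)"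
proof -
  assume f: "f \<noteq> 0"
  have fq: "f * Q ^ j \<noteq> 0" using f by simp
  have "geQ (tv f + v (Q ^ j)) (f * Q ^ j)"
    unfolding geQ_def qexp_shift
  proof
    fix i
    show "ge (tv f + v (Q ^ j)) ((if i < j then 0 else qx f (i - j)) * Q ^ i)"
    proof (cases "i < j \<or> qx f (i - j) = 0")
      case True then show ?thesis by auto
    next
      case False
      then have "Q ^ i = Q ^ (i - j) * Q ^ j" by (simp add: power_add[symmetric])
      then show ?thesis using False tv_le[of f "i - j"] vmult
        by (simp add: ge_def mult.assoc[symmetric] vQpow)
    qed
  qed
  then have lo: "tv f + v (Q ^ j) \<le> tv (f * Q ^ j)" using tv_geI fq by blast
  obtain i where i: "qx f i \<noteq> 0" "tv f = v (qx f i * Q ^ i)" using tv_attained f by blast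
  have "tv (f * Q ^ j) \<le> v (qx (f * Q ^ j) (i + j) * Q ^ (i + j))"
    using tv_le[of "f * Q ^ j" "i + j"] i by (simp add: qexp_shift)
  also have "\<dots> = tv f + v (Q ^ j)" using i by (simp add: qexp_shift power_add mult.assoc[symmetric] vQpow)
  finally show ?thesis using lo by simp
qed

end


context keyp begin

lemma deg_prod_lt: "dg F < n \<Longrightarrow> dg G < n \<Longrightarrow> dg (F * G) < 2 * n - 1"
  using degree_mult_le[of F G] by linarith

lemma low_or0: "x = 0 \<or> dg x < n \<Longrightarrow> dg x < n"
  using degQ by auto

lemma term_qexp:
  assumes "dg F < n" "dg G < n"
  shows "qx (F * G * Q ^ k) l = (if l = k then (F * G) mod Q else if l = Suc k then (F * G) div Q else 0)"
proof -
  have e: "F * G * Q ^ k = ((F * G) mod Q) * Q ^ k + ((F * G) div Q) * Q ^ Suc k"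
  proof -
    have "F * G = (F * G) div Q * Q + (F * G) mod Q" by simp
    then have "F * G * Q ^ k = ((F * G) div Q * Q + (F * G) mod Q) * Q ^ k" by simp
    also have "\<dots> = ((F * G) div Q) * (Q * Q ^ k) + ((F * G) mod Q) * Q ^ k"
      by (simp only: distrib_right mult.assoc)
    also have "\<dots> = ((F * G) mod Q) * Q ^ k + ((F * G) div Q) * Q ^ Suc k"
      by (simp only: power_Suc add.commute)
    finally show ?thesis .
  qed
  have d1: "dg ((F * G) mod Q) < n" by (rule low_or0) (use degree_mod_less[of Q "F * G"] in auto)
  have d2: "dg ((F * G) div Q) < n"
  proof (cases "(F * G) div Q = 0")
    case True then show ?thesis using degQ by simp
  next
    case False then show ?thesis using deg_div_lt[OF deg_prod_lt[OF assms]] by simp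
  qed
  show ?thesis unfolding e qexp_add qexp_shift qexp_low[OF d1] qexp_low[OF d2] by auto
qed

lemma term_val:
  assumes F: "F \<noteq> 0" "dg F < n" and G: "G \<noteq> 0" "dg G < n"
  shows "qx (F * G * Q ^ k) k * Q ^ k \<noteq> 0 \<and> v (qx (F * G * Q ^ k) k * Q ^ k) = v F + v G + v (Q ^ k)"
    and "l \<noteq> k \<Longrightarrow> gt (v F + v G + v (Q ^ k)) (qx (F * G * Q ^ k) l * Q ^ l)"
proof -
  note KL = key_lemma[OF F G]
  show "qx (F * G * Q ^ k) k * Q ^ k \<noteq> 0 \<and> v (qx (F * G * Q ^ k) k * Q ^ k) = v F + v G + v (Q ^ k)"
    unfolding term_qexp[OF F(2) G(2)] using KL vmult F G by (simp add: vQpow)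
  assume "l \<noteq> k"
  show "gt (v F + v G + v (Q ^ k)) (qx (F * G * Q ^ k) l * Q ^ l)"
  proof (cases "l = Suc k \<and> (F * G) div Q \<noteq> 0")
    case True
    have "(F * G) div Q * Q ^ Suc k = ((F * G) div Q * Q) * Q ^ k" by (simp add: mult.assoc)
    moreover have "v (((F * G) div Q * Q) * Q ^ k) = v ((F * G) div Q * Q) + v (Q ^ k)"
      using True by (intro vQpow) simp
    ultimately show ?thesis unfolding term_qexp[OF F(2) G(2)] using True KL \<open>l \<noteq> k\<close> vmult[OF F(1) G(1)]
      by (simp add: gt_def mult.assoc)
  next
    case False
    then show ?thesis unfolding term_qexp[OF F(2) G(2)] using \<open>l \<noteq> k\<close> by (auto simp: gt_def)
  qed
qed

lemma gt_mono: "gt \<gamma> x \<Longrightarrow> \<delta> \<le> \<gamma> \<Longrightarrow> gt \<delta> x"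
  unfolding gt_def by (meson order_le_less_trans)

lemma vQadd: "v (Q ^ (i + j)) = v (Q ^ i) + v (Q ^ j)"
  by (simp add: power_add vmult)

lemma tv_mult:
  assumes f: "f \<noteq> 0" and g: "g \<noteq> 0"
  shows "tv (f * g) = tv f + tv g"
proof -
  define A where "A = {..dg f} \<times> {..dg g}"
  define Xt where "Xt p = (qx f (fst p) * qx g (snd p)) * Q ^ (fst p + snd p)" for p
  have finA: "finite A" unfolding A_def by simp
  have fg: "f * g = (\<Sum>p\<in>A. Xt p)"
  proof -
    have "f * g = (\<Sum>i\<le>dg f. qx f i * Q ^ i) * (\<Sum>j\<le>dg g. qx g j * Q ^ j)"
      using expansion[of f] expansion[of g] by simp
    also have "\<dots> = (\<Sum>i\<le>dg f. \<Sum>j\<le>dg g. (qx f i * Q ^ i) * (qx g j * Q ^ j))"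
      by (rule sum_product)
    also have "\<dots> = (\<Sum>p\<in>A. (qx f (fst p) * Q ^ fst p) * (qx g (snd p) * Q ^ snd p))"
      unfolding A_def by (simp add: sum.cartesian_product split_def)
    also have "\<dots> = (\<Sum>p\<in>A. Xt p)"
      unfolding Xt_def by (intro sum.cong refl) (simp add: power_add algebra_simps)
    finally show ?thesis .
  qed
  define \<gamma> where "\<gamma> = tv f + tv g"
  have dF: "qx f i = 0 \<or> dg (qx f i) < n" for i by (rule qexp_deg)
  have dG: "qx g i = 0 \<or> dg (qx g i) < n" for i by (rule qexp_deg)
  have vsplit: "v (qx f i) + v (qx g j) + v (Q ^ (i + j)) = v (qx f i * Q ^ i) + v (qx g j * Q ^ j)"
    if "qx f i \<noteq> 0" "qx g j \<noteq> 0" for i j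
    unfolding vQpow[OF that(1)] vQpow[OF that(2)] vQadd by (simp add: algebra_simps)
  have "geQ \<gamma> (Xt p)" for p
  proof (cases "qx f (fst p) = 0 \<or> qx g (snd p) = 0")
    case True then show ?thesis unfolding Xt_def by auto
  next
    case False
    then have nz: "qx f (fst p) \<noteq> 0" "qx g (snd p) \<noteq> 0" by auto
    have lo: "\<gamma> \<le> v (qx f (fst p)) + v (qx g (snd p)) + v (Q ^ (fst p + snd p))"
      unfolding vsplit[OF nz] \<gamma>_def using tv_le[OF nz(1)] tv_le[OF nz(2)] by (rule add_mono)
    define kk where "kk = fst p + snd p"
    have dd: "dg (qx f (fst p)) < n" "dg (qx g (snd p)) < n" using dF[of "fst p"] dG[of "snd p"] nz by auto
    show ?thesis unfolding geQ_def Xt_def kk_def[symmetric]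
    proof
      fix l show "ge \<gamma> (qx (qx f (fst p) * qx g (snd p) * Q ^ kk) l * Q ^ l)"
      proof (cases "l = kk")
        case True
        show ?thesis using term_val(1)[OF nz(1) dd(1) nz(2) dd(2), where k = kk] lo True
          unfolding kk_def[symmetric] by (simp add: ge_def)
      next
        case False
        have "gt (v (qx f (fst p)) + v (qx g (snd p)) + v (Q ^ kk)) (qx (qx f (fst p) * qx g (snd p) * Q ^ kk) l * Q ^ l)"
          using term_val(2)[OF nz(1) dd(1) nz(2) dd(2), where k = kk and l = l] False by simp
        then show ?thesis using lo unfolding kk_def[symmetric] by (intro gt_imp_ge) (rule gt_mono)
      qed
    qed
  qed
  then have "geQ \<gamma> (f * g)" unfolding fg by (intro geQ_sum)
  then have lower: "\<gamma> \<le> tv (f * g)" using tv_geI f g by simp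
  define i0 where "i0 = (LEAST i. qx f i \<noteq> 0 \<and> tv f = v (qx f i * Q ^ i))"
  define j0 where "j0 = (LEAST j. qx g j \<noteq> 0 \<and> tv g = v (qx g j * Q ^ j))"
  have i0: "qx f i0 \<noteq> 0 \<and> tv f = v (qx f i0 * Q ^ i0)"
    unfolding i0_def using tv_attained[OF f] by (metis (mono_tags, lifting) LeastI)
  have j0: "qx g j0 \<noteq> 0 \<and> tv g = v (qx g j0 * Q ^ j0)"
    unfolding j0_def using tv_attained[OF g] by (metis (mono_tags, lifting) LeastI)
  have ilt: "tv f < v (qx f i * Q ^ i)" if "i < i0" "qx f i \<noteq> 0" for i
  proof -
    have "\<not> (qx f i \<noteq> 0 \<and> tv f = v (qx f i * Q ^ i))" using not_less_Least[OF that(1)[unfolded i0_def]] by blast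
    then show ?thesis using tv_le[OF that(2)] that(2) by auto
  qed
  have jlt: "tv g < v (qx g j * Q ^ j)" if "j < j0" "qx g j \<noteq> 0" for j
  proof -
    have "\<not> (qx g j \<noteq> 0 \<and> tv g = v (qx g j * Q ^ j))" using not_less_Least[OF that(1)[unfolded j0_def]] by blast
    then show ?thesis using tv_le[OF that(2)] that(2) by auto
  qed
  define k where "k = i0 + j0"
  define p0 where "p0 = (i0, j0)"
  have p0A: "p0 \<in> A" unfolding p0_def A_def using i0 j0 qexp_big[of f i0] qexp_big[of g j0]
    by (auto simp: not_less[symmetric])
  have Z: "qx (f * g) k * Q ^ k = qx (Xt p0) k * Q ^ k + (\<Sum>p\<in>A - {p0}. qx (Xt p) k * Q ^ k)"
    unfolding fg qexp_sum sum_distrib_right using sum.remove[OF finA p0A] by simp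
  have nz0: "qx f i0 \<noteq> 0" "qx g j0 \<noteq> 0" using i0 j0 by auto
  have dd0: "dg (qx f i0) < n" "dg (qx g j0) < n" using dF[of i0] dG[of j0] nz0 by auto
  have X0: "qx (Xt p0) k * Q ^ k \<noteq> 0 \<and> v (qx (Xt p0) k * Q ^ k) = \<gamma>"
    using term_val(1)[OF nz0(1) dd0(1) nz0(2) dd0(2), where k = k] vsplit[OF nz0] i0 j0
    unfolding Xt_def p0_def k_def \<gamma>_def by simp
  have "gt \<gamma> (\<Sum>p\<in>A - {p0}. qx (Xt p) k * Q ^ k)"
  proof (rule gt_sum)
    fix p assume pA: "p \<in> A - {p0}"
    obtain i j where p: "p = (i, j)" by (cases p)
    show "gt \<gamma> (qx (Xt p) k * Q ^ k)"
    proof (cases "qx f i = 0 \<or> qx g j = 0")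
      case True then show ?thesis unfolding Xt_def p by auto
    next
      case False
      then have nz: "qx f i \<noteq> 0" "qx g j \<noteq> 0" by auto
      have dd: "dg (qx f i) < n" "dg (qx g j) < n" using dF[of i] dG[of j] nz by auto
      note tv1 = term_val(1)[OF nz(1) dd(1) nz(2) dd(2), where k = "i + j"]
      note tv2 = term_val(2)[OF nz(1) dd(1) nz(2) dd(2), where k = "i + j" and l = k]
      have lo: "\<gamma> \<le> v (qx f i) + v (qx g j) + v (Q ^ (i + j))"
        unfolding vsplit[OF nz] \<gamma>_def using tv_le[OF nz(1)] tv_le[OF nz(2)] by (rule add_mono)
      show ?thesis
      proof (cases "k = i + j")
        case True
        have "i < i0 \<or> j < j0" using True pA unfolding p p0_def k_def by auto
        then have "\<gamma> < v (qx f i) + v (qx g j) + v (Q ^ (i + j))"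
        proof
          assume "i < i0"
          then have "tv f + tv g < v (qx f i * Q ^ i) + v (qx g j * Q ^ j)"
            using ilt[of i] tv_le[OF nz(2)] nz by (simp add: add_less_le_mono)
          then show ?thesis unfolding vsplit[OF nz] \<gamma>_def .
        next
          assume "j < j0"
          then have "tv f + tv g < v (qx f i * Q ^ i) + v (qx g j * Q ^ j)"
            using jlt[of j] tv_le[OF nz(1)] nz by (simp add: add_le_less_mono)
          then show ?thesis unfolding vsplit[OF nz] \<gamma>_def .
        qed
        then show ?thesis using tv1 True unfolding Xt_def p by (simp add: gt_def)
      next
        case False
        then have "gt (v (qx f i) + v (qx g j) + v (Q ^ (i + j))) (qx (Xt p) k * Q ^ k)"
          using tv2 unfolding Xt_def p by simp
        then show ?thesis using lo by (rule gt_mono)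
      qed
    qed
  qed
  then have "qx (f * g) k * Q ^ k \<noteq> 0 \<and> v (qx (f * g) k * Q ^ k) = \<gamma>"
    unfolding Z using dominant[of "qx (Xt p0) k * Q ^ k"] X0 by simp
  then have "tv (f * g) \<le> \<gamma>" using tv_le[of "f * g" k] by auto
  then show ?thesis using lower unfolding \<gamma>_def by simp
qed

end


context keyp begin

lemma tv_1[simp]: "tv 1 = 0"
  using tv_low[of 1] degQ by simp

lemma tv_const: "c \<noteq> 0 \<Longrightarrow> tv [:c:] = v [:c:]"
  using tv_low[of "[:c:]"] degQ by simp

lemma tv_pow: "f \<noteq> 0 \<Longrightarrow> tv (f ^ k) = nmul k (tv f)"
  by (induction k) (simp_all add: tv_mult)

lemma tv_Qpow: "tv (Q ^ j) = v (Q ^ j)"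
  using tv_shift[of 1 j] by simp

lemma pow_mod:
  assumes h: "h \<noteq> 0" "dg h < n"
  shows "(h ^ k) mod Q \<noteq> 0 \<and> v ((h ^ k) mod Q) = nmul k (v h)"
proof (induction k)
  case 0
  have "(1::'a poly) mod Q = 1" using degQ by (simp add: mod_poly_less)
  then show ?case by simp
next
  case (Suc k)
  define s where "s = (h ^ k) mod Q"
  have s: "s \<noteq> 0" "dg s < n" using Suc degree_mod_less[of Q "h ^ k"] unfolding s_def by auto
  have e: "(h ^ Suc k) mod Q = (h * s) mod Q" unfolding s_def by (simp add: mod_mult_right_eq)
  have "(h * s) mod Q \<noteq> 0 \<and> v ((h * s) mod Q) = v (h * s)" using key_lemma[OF h s] by simp
  then show ?case unfolding e using vmult[OF h(1) s(1)] Suc unfolding s_def by simp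
qed

lemma Fract_0[simp]: "Fract 0 b = 0"
  by (simp add: Zero_fract_def eq_fract(3))

abbreviation tvf where "tvf \<equiv> trunc_val_frac v Q"

lemma tvf_Fract: assumes "a \<noteq> 0" "b \<noteq> 0" shows "tvf (Fract a b) = tv a - tv b"
  unfolding trunc_val_frac_def
proof (rule the_equality)
  show "\<exists>f g. f \<noteq> 0 \<and> g \<noteq> 0 \<and> Fract a b = Fract f g \<and> tv a - tv b = tv f - tv g"
    using assms by blast
  fix w assume "\<exists>f g. f \<noteq> 0 \<and> g \<noteq> 0 \<and> Fract a b = Fract f g \<and> w = tv f - tv g"
  then obtain f g where fg: "f \<noteq> 0" "g \<noteq> 0" "Fract a b = Fract f g" "w = tv f - tv g" by blast
  then have "a * g = f * b" using assms by (simp add: eq_fract)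
  then have "tv a + tv g = tv f + tv b" using tv_mult assms fg by metis
  have "w = (tv b + tv f) - tv b - tv g" using fg(4) by simp
  also have "\<dots> = (tv a + tv g) - tv b - tv g" using \<open>tv a + tv g = tv f + tv b\<close> by (simp add: add.commute)
  also have "\<dots> = tv a - tv b" by simp
  finally show "w = tv a - tv b" .
qed

lemma fract_nz_cases:
  assumes "z \<noteq> 0"
  obtains a b where "a \<noteq> 0" "b \<noteq> 0" "z = Fract a b"
proof -
  obtain a b where "z = Fract a b" "b \<noteq> 0" by (cases z) auto
  moreover then have "a \<noteq> 0" using assms by auto
  ultimately show ?thesis using that by blast
qed

lemma tvf_mult: "z \<noteq> 0 \<Longrightarrow> w \<noteq> 0 \<Longrightarrow> tvf (z * w) = tvf z + tvf w"
proof -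
  assume "z \<noteq> 0" "w \<noteq> 0"
  then obtain a b c d where "a \<noteq> 0" "b \<noteq> 0" "z = Fract a b" "c \<noteq> 0" "d \<noteq> 0" "w = Fract c d"
    by (metis fract_nz_cases)
  then show ?thesis by (simp add: mult_fract tvf_Fract tv_mult algebra_simps)
qed

lemma tvf_one[simp]: "tvf 1 = 0"
  using tvf_Fract[of 1 1] by (simp add: One_fract_def)

lemma tvf_uminus: "tvf (- z) = tvf z"
proof (cases "z = 0")
  case False
  then obtain a b where "a \<noteq> 0" "b \<noteq> 0" "z = Fract a b" by (metis fract_nz_cases)
  then show ?thesis by (simp add: tvf_Fract tv_uminus)
qed simp

lemma tvf_add: "z \<noteq> 0 \<Longrightarrow> w \<noteq> 0 \<Longrightarrow> z + w \<noteq> 0 \<Longrightarrow> min (tvf z) (tvf w) \<le> tvf (z + w)"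
proof -
  assume zw: "z \<noteq> 0" "w \<noteq> 0" "z + w \<noteq> 0"
  then obtain a b c d where abcd: "a \<noteq> 0" "b \<noteq> 0" "z = Fract a b" "c \<noteq> 0" "d \<noteq> 0" "w = Fract c d"
    by (metis fract_nz_cases)
  have s: "z + w = Fract (a * d + c * b) (b * d)" using abcd by (simp add: add_fract)
  have nz: "a * d + c * b \<noteq> 0" using zw s by auto
  have "min (tv (a * d)) (tv (c * b)) \<le> tv (a * d + c * b)"
    using tv_add[of "a * d" "c * b"] abcd nz by simp
  then have "min (tv a + tv d) (tv c + tv b) - (tv b + tv d) \<le> tv (a * d + c * b) - (tv b + tv d)"
    using abcd by (simp add: tv_mult)
  moreover have "min (tv a + tv d) (tv c + tv b) - (tv b + tv d) = min (tv a - tv b) (tv c - tv d)"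
    by (simp add: min_def algebra_simps)
  ultimately show ?thesis using abcd s nz by (simp add: tvf_Fract tv_mult)
qed

lemma tvf_inverse: "z \<noteq> 0 \<Longrightarrow> tvf (inverse z) = - tvf z"
  using tvf_mult[of z "inverse z"] by (simp add: eq_neg_iff_add_eq_0 add.commute)

lemma tvf_const: "c \<noteq> 0 \<Longrightarrow> tvf (Fract [:c:] 1) = v [:c:]"
  by (simp add: tvf_Fract tv_const)

lemma Fract_pow: "Fract a b ^ k = Fract (a ^ k) (b ^ k)"
  by (induction k) (simp_all add: mult_fract One_fract_def)

lemma Fract_add_same: "d \<noteq> 0 \<Longrightarrow> Fract a d + Fract b d = Fract (a + b) d"
proof -
  assume d: "d \<noteq> 0"
  have "Fract a d + Fract b d = Fract ((a + b) * d) (d * d)" using d by (simp add: add_fract distrib_right)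
  also have "\<dots> = Fract (d * (a + b)) (d * d)" by (simp add: mult.commute)
  also have "\<dots> = Fract (a + b) d" using d by (rule mult_fract_cancel)
  finally show ?thesis .
qed

end


context keyp begin

abbreviation RR where "RR \<equiv> val_ring v Q"
abbreviation II where "II \<equiv> max_ideal v Q"

lemma RR_simps[simp]:
  "carrier RR = {z. z = 0 \<or> 0 \<le> tvf z}" "mult RR = (*)" "add RR = (+)" "one RR = 1" "zero RR = 0"
  by (simp_all add: val_ring_def)

lemma RR_add_closed: "z \<in> carrier RR \<Longrightarrow> w \<in> carrier RR \<Longrightarrow> z + w \<in> carrier RR"
proof -
  assume a: "z \<in> carrier RR" "w \<in> carrier RR"
  show ?thesis
  proof (cases "z = 0 \<or> w = 0 \<or> z + w = 0")
    case True then show ?thesis using a by auto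
  next
    case False
    then have "min (tvf z) (tvf w) \<le> tvf (z + w)" using tvf_add by blast
    moreover have "0 \<le> min (tvf z) (tvf w)" using a False by simp
    ultimately have "0 \<le> tvf (z + w)" by (rule order_trans[rotated])
    then show ?thesis by simp
  qed
qed

lemma RR_mult_closed: "z \<in> carrier RR \<Longrightarrow> w \<in> carrier RR \<Longrightarrow> z * w \<in> carrier RR"
  by (cases "z = 0 \<or> w = 0") (auto simp: tvf_mult)

lemma RR_uminus_closed: "z \<in> carrier RR \<Longrightarrow> - z \<in> carrier RR"
  by (simp add: tvf_uminus)

lemma RR_0: "0 \<in> carrier RR" and RR_1: "1 \<in> carrier RR" by simp_all

lemma RR_cring: "cring RR"
proof (rule cringI)
  show "abelian_group RR"
    by (rule abelian_groupI) (auto simp: RR_add_closed RR_0 simp del: RR_simps(1) intro: RR_uminus_closed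
        intro!: bexI[where x = "- _"] simp: add.assoc add.commute)
  show "comm_monoid RR"
    by (rule comm_monoidI) (auto simp: RR_mult_closed RR_1 simp del: RR_simps(1) simp: mult.assoc mult.commute)
  show "\<And>x y z. x \<in> carrier RR \<Longrightarrow> y \<in> carrier RR \<Longrightarrow> z \<in> carrier RR \<Longrightarrow>
      (x \<oplus>\<^bsub>RR\<^esub> y) \<otimes>\<^bsub>RR\<^esub> z = x \<otimes>\<^bsub>RR\<^esub> z \<oplus>\<^bsub>RR\<^esub> y \<otimes>\<^bsub>RR\<^esub> z"
    by (simp add: distrib_right)
qed

interpretation RRc: cring RR by (rule RR_cring)

lemma RR_a_inv: "z \<in> carrier RR \<Longrightarrow> \<ominus>\<^bsub>RR\<^esub> z = - z"
  by (rule RRc.minus_equality) (auto simp: RR_uminus_closed simp del: RR_simps(1))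

lemma II_sub: "II \<subseteq> carrier RR"
  unfolding max_ideal_def by auto

lemma II_ideal: "ideal II RR"
proof (rule idealI)
  show "ring RR" by (rule RRc.ring_axioms)
  show "subgroup II (add_monoid RR)"
  proof (rule RRc.add.subgroupI)
    show "II \<subseteq> carrier RR" using II_sub by simp
    show "II \<noteq> {}" unfolding max_ideal_def by auto
    fix a b assume a: "a \<in> II" and b: "b \<in> II"
    then have ac: "a \<in> carrier RR" using II_sub by auto
    show "\<ominus>\<^bsub>RR\<^esub> a \<in> II"
      using a RR_a_inv[OF ac] unfolding max_ideal_def by (simp add: tvf_uminus)
    show "a \<oplus>\<^bsub>RR\<^esub> b \<in> II"
    proof (cases "a = 0 \<or> b = 0 \<or> a + b = 0")
      case True then show ?thesis using a b by (auto simp: max_ideal_def)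
    next
      case False
      then have "min (tvf a) (tvf b) \<le> tvf (a + b)" using tvf_add by blast
      moreover have "0 < min (tvf a) (tvf b)" using a b False unfolding max_ideal_def by simp
      ultimately have "0 < tvf (a + b)" by (rule order_less_le_trans[rotated])
      then show ?thesis unfolding max_ideal_def by simp
    qed
  qed
  fix a x assume a: "a \<in> II" and x: "x \<in> carrier RR"
  show "x \<otimes>\<^bsub>RR\<^esub> a \<in> II"
  proof (cases "a = 0 \<or> x = 0")
    case False
    then show ?thesis using a x unfolding max_ideal_def by (simp add: tvf_mult add_nonneg_pos)
  qed (auto simp: max_ideal_def)
  show "a \<otimes>\<^bsub>RR\<^esub> x \<in> II"
  proof (cases "a = 0 \<or> x = 0")
    case False
    then show ?thesis using a x unfolding max_ideal_def by (simp add: tvf_mult add_pos_nonneg)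
  qed (auto simp: max_ideal_def)
qed

interpretation IIi: ideal II RR by (rule II_ideal)

abbreviation pi where "pi \<equiv> (+>\<^bsub>RR\<^esub>) II"

lemma residue_eq: "residue v Q z = pi z"
  unfolding residue_def ..

lemma pi_hom: "ring_hom_ring RR (RR Quot II) pi"
  by (rule IIi.rcos_ring_hom_ring)

interpretation pih: ring_hom_ring RR "RR Quot II" pi by (rule pi_hom)

lemma quot_carrier: "carrier (RR Quot II) = pi ` carrier RR"
  unfolding FactRing_def A_RCOSETS_def RCOSETS_def by (auto simp: a_r_coset_def)

lemma pi_zero_iff: "z \<in> carrier RR \<Longrightarrow> pi z = II \<longleftrightarrow> z \<in> II"
  using IIi.rcos_const_imp_mem RRc.a_rcos_zero[OF II_ideal] by blast

lemma quot_zero: "\<zero>\<^bsub>RR Quot II\<^esub> = II"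
  by (simp add: FactRing_def)

lemma RF_field: "field (RR Quot II)"
proof -
  interpret Qc: cring "RR Quot II" by (rule IIi.quotient_is_cring[OF RR_cring])
  show ?thesis
  proof (rule Qc.cring_fieldI2)
    have "(1::'a poly fract) \<notin> II" unfolding max_ideal_def by simp
    then show "\<zero>\<^bsub>RR Quot II\<^esub> \<noteq> \<one>\<^bsub>RR Quot II\<^esub>"
      using pi_zero_iff[of 1] pih.hom_one by (simp add: quot_zero)
    fix a assume a: "a \<in> carrier (RR Quot II)" "a \<noteq> \<zero>\<^bsub>RR Quot II\<^esub>"
    then obtain z where z: "z \<in> carrier RR" "a = pi z" unfolding quot_carrier by auto
    then have zI: "z \<notin> II" using a pi_zero_iff quot_zero by auto
    then have z0: "z \<noteq> 0" and tz: "tvf z = 0" using z unfolding max_ideal_def by auto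
    define w where "w = inverse z"
    have wc: "w \<in> carrier RR" unfolding w_def using tvf_inverse[OF z0] tz by simp
    have "a \<otimes>\<^bsub>RR Quot II\<^esub> pi w = pi (z * w)"
      using pih.hom_mult[OF z(1) wc] z by simp
    also have "\<dots> = \<one>\<^bsub>RR Quot II\<^esub>" using z0 pih.hom_one unfolding w_def by simp
    finally show "\<exists>b\<in>carrier (RR Quot II). a \<otimes>\<^bsub>RR Quot II\<^esub> b = \<one>\<^bsub>RR Quot II\<^esub>"
      using wc quot_carrier by auto
  qed
qed

end


locale pctx = keyp v Q for v :: "'a::field poly \<Rightarrow> 'g::linordered_ab_group_add" and Q +
  fixes h :: "'a poly" and e :: nat
  assumes e1: "e \<ge> 1" and h0: "h \<noteq> 0" and hdeg: "dg h < n" and hv: "v (Q ^ e) = v h"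
begin

definition rr where "rr = Fract (Q ^ e) h"

lemma tvf_rr: "tvf rr = 0"
  unfolding rr_def using tvf_Fract[of "Q ^ e" h] h0 tv_Qpow tv_low[OF h0 hdeg] hv by simp

lemma Fract_sum_same: "d \<noteq> 0 \<Longrightarrow> (\<Sum>k\<in>A. Fract (g k) d) = Fract (\<Sum>k\<in>A. g k) d"
proof (induction A rule: infinite_finite_induct)
  case (insert x F)
  then show ?case using Fract_add_same[of d "g x" "sum g F"] by simp
qed simp_all

lemma term_fract:
  assumes "k \<le> m"
  shows "Fract [:c:] 1 * rr ^ k = Fract ([:c:] * h ^ (m - k) * Q ^ (e * k)) (h ^ m)"
proof -
  have "Fract [:c:] 1 * rr ^ k = Fract ([:c:] * Q ^ (e * k)) (h ^ k)"
    unfolding rr_def Fract_pow by (simp add: mult_fract power_mult)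
  also have "\<dots> = Fract (h ^ (m - k) * ([:c:] * Q ^ (e * k))) (h ^ (m - k) * h ^ k)"
    using h0 by (subst mult_fract_cancel) simp_all
  also have "h ^ (m - k) * h ^ k = h ^ m" using assms by (simp add: power_add[symmetric])
  finally show ?thesis by (simp add: ac_simps)
qed

lemma vQek: "v (Q ^ (e * k)) = nmul k (v h)"
  using vpow[of "Q ^ e" k] hv by (simp add: power_mult)

lemma core:
  assumes d: "\<forall>k\<le>m. d k = 0 \<or> 0 \<le> v [:d k:]" and dm: "d m \<noteq> 0" "v [:d m:] = 0"
  shows "(\<Sum>k\<le>m. Fract [:d k:] 1 * rr ^ k) \<notin> II"
proof -
  define T where "T k = [:d k:] * h ^ (m - k) * Q ^ (e * k)" for k
  define F where "F = (\<Sum>k\<le>m. T k)"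
  have sumF: "(\<Sum>k\<le>m. Fract [:d k:] 1 * rr ^ k) = Fract F (h ^ m)"
  proof -
    have "(\<Sum>k\<le>m. Fract [:d k:] 1 * rr ^ k) = (\<Sum>k\<le>m. Fract (T k) (h ^ m))"
      unfolding T_def by (intro sum.cong refl) (simp add: term_fract)
    also have "\<dots> = Fract F (h ^ m)" unfolding F_def using h0 by (simp add: Fract_sum_same)
    finally show ?thesis .
  qed
  define P where "P k \<longleftrightarrow> k \<le> m \<and> d k \<noteq> 0 \<and> v [:d k:] = 0" for k
  have Pm: "P m" unfolding P_def using dm by simp
  define i where "i = (LEAST k. P k)"
  have Pi: "P i" unfolding i_def using Pm by (rule LeastI)
  have im: "i \<le> m" using Pi unfolding P_def by simp
  define l where "l = e * i"
  define \<gamma> where "\<gamma> = nmul m (v h)"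
  have hm: "h ^ (m - i) \<noteq> 0" using h0 by simp
  have Ti: "qx (T i) l * Q ^ l \<noteq> 0 \<and> v (qx (T i) l * Q ^ l) = \<gamma>"
  proof -
    have di: "d i \<noteq> 0" "v [:d i:] = 0" using Pi unfolding P_def by auto
    have "qx (T i) l = ([:d i:] * h ^ (m - i)) mod Q"
      unfolding T_def l_def qexp_shift by (simp add: qexp_def)
    also have "\<dots> = Polynomial.smult (d i) ((h ^ (m - i)) mod Q)"
      by (simp add: mod_smult_left)
    finally have q: "qx (T i) l = Polynomial.smult (d i) ((h ^ (m - i)) mod Q)" .
    note pm = pow_mod[OF h0 hdeg, of "m - i"]
    have s: "Polynomial.smult (d i) ((h ^ (m - i)) mod Q) = [:d i:] * ((h ^ (m - i)) mod Q)" by simp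
    have ne: "qx (T i) l \<noteq> 0" unfolding q using di pm by simp
    have "v (qx (T i) l) = nmul (m - i) (v h)"
      unfolding q s using vmult[of "[:d i:]" "(h ^ (m - i)) mod Q"] di pm by simp
    then have "v (qx (T i) l * Q ^ l) = nmul (m - i) (v h) + nmul i (v h)"
      using vQpow[OF ne, of l] vQek[of i] unfolding l_def by simp
    also have "\<dots> = \<gamma>" unfolding \<gamma>_def using im nmul_add_nat[of "m - i" i "v h"] by simp
    finally show ?thesis using ne by simp
  qed
  have rest: "gt \<gamma> (qx (T k) l * Q ^ l)" if k: "k \<in> {..m} - {i}" for k
  proof (cases "i < k")
    case True
    then have "l < e * k" unfolding l_def using e1 by simp
    then show ?thesis unfolding T_def qexp_shift by simp
  next
    case False
    then have ki: "k < i" using k by auto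
    show ?thesis
    proof (cases "d k = 0")
      case True then show ?thesis unfolding T_def by simp
    next
      case False
      have "\<not> P k" using not_less_Least[OF ki[unfolded i_def]] .
      then have pos: "0 < v [:d k:]" using d k False unfolding P_def by force
      show ?thesis
      proof (cases "qx (T k) l = 0")
        case True then show ?thesis by simp
      next
        case nz: False
        have Tk0: "T k \<noteq> 0" using nz by auto
        have c0: "[:d k:] \<noteq> 0" using False by simp
        have ne2: "h ^ (m - k) * Q ^ (e * k) \<noteq> 0" using h0 by simp
        have "tv (T k) = tv [:d k:] + tv (h ^ (m - k) * Q ^ (e * k))"
          unfolding T_def mult.assoc by (rule tv_mult[OF c0 ne2])
        also have "tv (h ^ (m - k) * Q ^ (e * k)) = tv (h ^ (m - k)) + v (Q ^ (e * k))"
          using tv_shift[of "h ^ (m - k)" "e * k"] h0 by simp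
        finally have "tv (T k) = v [:d k:] + nmul (m - k) (v h) + nmul k (v h)"
          using tv_const[OF False] tv_pow[OF h0] tv_low[OF h0 hdeg] vQek by (simp add: add.assoc)
        also have "\<dots> = v [:d k:] + \<gamma>" using k nmul_add_nat[of "m - k" k "v h"] unfolding \<gamma>_def
          by (simp add: add.assoc)
        finally have "\<gamma> < tv (T k)" using pos by simp
        then have "\<gamma> < v (qx (T k) l * Q ^ l)" using tv_le[OF nz] by (rule less_le_trans)
        then show ?thesis unfolding gt_def by simp
      qed
    qed
  qed
  have "qx F l * Q ^ l = qx (T i) l * Q ^ l + (\<Sum>k\<in>{..m} - {i}. qx (T k) l * Q ^ l)"
    unfolding F_def qexp_sum sum_distrib_right using sum.remove[of "{..m}" i] im by simp
  moreover have "gt \<gamma> (\<Sum>k\<in>{..m} - {i}. qx (T k) l * Q ^ l)" by (rule gt_sum) (rule rest)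
  ultimately have Fl: "qx F l * Q ^ l \<noteq> 0 \<and> v (qx F l * Q ^ l) = \<gamma>"
    using dominant[of "qx (T i) l * Q ^ l"] Ti by simp
  then have F0: "F \<noteq> 0" by auto
  have "tv F \<le> \<gamma>" using tv_le[of F l] Fl by auto
  then have "tvf (Fract F (h ^ m)) \<le> 0"
    using tvf_Fract[OF F0] h0 tv_pow[OF h0, of m] tv_low[OF h0 hdeg] unfolding \<gamma>_def by simp
  moreover have "Fract F (h ^ m) \<noteq> 0"
  proof
    assume "Fract F (h ^ m) = 0"
    then have "Fract F (h ^ m) = Fract 0 1" by (simp only: Zero_fract_def)
    then have "F * 1 = 0 * h ^ m" using eq_fract(1)[of "h ^ m" 1 F 0] h0 by simp
    then show False using F0 by simp
  qed
  ultimately show ?thesis unfolding sumF max_ideal_def by (simp add: not_less)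
qed

end


context pctx begin

interpretation RRc: cring RR by (rule RR_cring)
interpretation IIi: ideal II RR by (rule II_ideal)
interpretation pih: ring_hom_ring RR "RR Quot II" pi by (rule pi_hom)
interpretation RF: field "RR Quot II" by (rule RF_field)

definition Cst where "Cst = {Fract [:c:] 1 | c. c = 0 \<or> 0 \<le> v [:c:]}"

lemma const_in: "c = 0 \<or> 0 \<le> v [:c:] \<Longrightarrow> Fract [:c:] 1 \<in> carrier RR"
  by (cases "c = 0") (auto simp: tvf_const)

lemma Cst_sub: "Cst \<subseteq> carrier RR"
  unfolding Cst_def using const_in by auto

lemma vconst_mult: "c \<noteq> 0 \<Longrightarrow> d \<noteq> 0 \<Longrightarrow> v [:c * d:] = v [:c:] + v [:d:]"
  using vmult[of "[:c:]" "[:d:]"] by (simp add: mult.commute)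

lemma Cst_subring: "subring Cst RR"
proof (rule RRc.subringI)
  show "Cst \<subseteq> carrier RR" by (rule Cst_sub)
  show "\<one>\<^bsub>RR\<^esub> \<in> Cst" unfolding Cst_def using v1 by (auto simp: One_fract_def one_pCons intro!: exI[of _ 1])
  fix a b assume a: "a \<in> Cst" and b: "b \<in> Cst"
  then obtain c d where c: "a = Fract [:c:] 1" "c = 0 \<or> 0 \<le> v [:c:]" and d: "b = Fract [:d:] 1" "d = 0 \<or> 0 \<le> v [:d:]"
    unfolding Cst_def by blast
  have ac: "a \<in> carrier RR" using a Cst_sub by auto
  have "- a = Fract [:- c:] 1" using c by (simp add: minus_fract)
  moreover have "v [:- c:] = v [:c:]" using vuminus[of "[:c:]"] by simp
  ultimately show "\<ominus>\<^bsub>RR\<^esub> a \<in> Cst" unfolding RR_a_inv[OF ac] Cst_def using c by force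
  have "a \<otimes>\<^bsub>RR\<^esub> b = Fract [:c * d:] 1" using c d by (simp add: mult_fract mult.commute)
  moreover have "c * d = 0 \<or> 0 \<le> v [:c * d:]"
    using c d vconst_mult[of c d] by (cases "c = 0 \<or> d = 0") auto
  ultimately show "a \<otimes>\<^bsub>RR\<^esub> b \<in> Cst" unfolding Cst_def by blast
  have "a \<oplus>\<^bsub>RR\<^esub> b = Fract [:c + d:] 1" using c d by (simp add: Fract_add_same)
  moreover have "c + d = 0 \<or> 0 \<le> v [:c + d:]"
  proof (cases "c = 0 \<or> d = 0 \<or> c + d = 0")
    case True then show ?thesis using c d by auto
  next
    case False
    then have "min (v [:c:]) (v [:d:]) \<le> v ([:c:] + [:d:])" using vadd[of "[:c:]" "[:d:]"] by simp
    moreover have "0 \<le> min (v [:c:]) (v [:d:])" using c d False by simp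
    ultimately have "0 \<le> v ([:c:] + [:d:])" by (rule order_trans[rotated])
    then show ?thesis by simp
  qed
  ultimately show "a \<oplus>\<^bsub>RR\<^esub> b \<in> Cst" unfolding Cst_def by blast
qed

abbreviation Kb where "Kb \<equiv> pi ` Cst"

lemma base_eq: "base_residue_field v Q = Kb"
  unfolding base_residue_field_def Cst_def residue_def by auto

lemma Kb_subring: "subring Kb (RR Quot II)"
  by (rule pih.img_is_subring[OF Cst_subring])

lemma Kb_subfield: "subfield Kb (RR Quot II)"
proof (rule RF.subfieldI'[OF Kb_subring])
  fix k assume k: "k \<in> Kb - {\<zero>\<^bsub>RR Quot II\<^esub>}"
  then obtain c where c: "k = pi (Fract [:c:] 1)" "c = 0 \<or> 0 \<le> v [:c:]" unfolding Cst_def by auto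
  have cc: "Fract [:c:] 1 \<in> carrier RR" using c by (intro const_in) auto
  have nI: "Fract [:c:] 1 \<notin> II" using k c(1) pi_zero_iff[OF cc] quot_zero by auto
  have c0: "c \<noteq> 0"
  proof
    assume "c = 0" then have "Fract [:c:] 1 = 0" by simp
    then show False using nI unfolding max_ideal_def by simp
  qed
  have "\<not> 0 < v [:c:]" using nI c0 unfolding max_ideal_def by (simp add: tvf_const)
  then have vc: "v [:c:] = 0" using c(2) c0 by simp
  have vi: "v [:inverse c:] = 0" using vconst_mult[of c "inverse c"] c0 vc by (simp add: one_pCons[symmetric])
  have ic: "Fract [:inverse c:] 1 \<in> Cst" unfolding Cst_def using vi by auto
  have icc: "Fract [:inverse c:] 1 \<in> carrier RR" using ic Cst_sub by auto
  have "k \<otimes>\<^bsub>RR Quot II\<^esub> pi (Fract [:inverse c:] 1) = pi (Fract [:c:] 1 * Fract [:inverse c:] 1)"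
    using pih.hom_mult[OF cc icc] c(1) by simp
  also have "Fract [:c:] 1 * Fract [:inverse c:] 1 = 1" using c0 by (simp add: mult_fract One_fract_def one_pCons)
  finally have pr: "k \<otimes>\<^bsub>RR Quot II\<^esub> pi (Fract [:inverse c:] 1) = \<one>\<^bsub>RR Quot II\<^esub>" using pih.hom_one by simp
  have kc: "k \<in> carrier (RR Quot II)" using c(1) cc pih.hom_closed by simp
  have ic2: "pi (Fract [:inverse c:] 1) \<in> carrier (RR Quot II)" using icc pih.hom_closed by simp
  have "inv\<^bsub>RR Quot II\<^esub> k = pi (Fract [:inverse c:] 1)" by (rule RF.comm_inv_char[OF kc ic2 pr])
  then show "inv\<^bsub>RR Quot II\<^esub> k \<in> Kb" using ic by simp
qed

lemma RR_pow: "x [^]\<^bsub>RR\<^esub> (k::nat) = x ^ k"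
  by (induction k) (simp_all add: mult.commute)

lemma eval_RR: "ring.eval RR l x = (\<Sum>k<length l. l ! (length l - Suc k) * x ^ k)"
proof (induction l)
  case Nil then show ?case by simp
next
  case (Cons a l)
  have "ring.eval RR (a # l) x = a * x ^ length l + ring.eval RR l x" by (simp add: RR_pow)
  also have "ring.eval RR l x = (\<Sum>k<length l. (a # l) ! (length (a # l) - Suc k) * x ^ k)"
    unfolding Cons.IH by (intro sum.cong refl) (simp add: Suc_diff_Suc)
  finally show ?case by (simp add: add.commute)
qed

lemma rr_carrier: "rr \<in> carrier RR" using tvf_rr by simp

lemma transc_Kb: "ring.transcendental (RR Quot II) Kb (pi rr)"
proof -
  have xc: "pi rr \<in> carrier (RR Quot II)" using rr_carrier pih.hom_closed by simp
  have ker: "a_kernel (Kb[X]\<^bsub>RR Quot II\<^esub>) (RR Quot II) (\<lambda>p. ring.eval (RR Quot II) p (pi rr)) = {[]}"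
  proof
    show "{[]} \<subseteq> a_kernel (Kb[X]\<^bsub>RR Quot II\<^esub>) (RR Quot II) (\<lambda>p. ring.eval (RR Quot II) p (pi rr))"
      unfolding a_kernel_def' univ_poly_carrier[symmetric] polynomial_def by simp
    show "a_kernel (Kb[X]\<^bsub>RR Quot II\<^esub>) (RR Quot II) (\<lambda>p. ring.eval (RR Quot II) p (pi rr)) \<subseteq> {[]}"
    proof
      fix p assume "p \<in> a_kernel (Kb[X]\<^bsub>RR Quot II\<^esub>) (RR Quot II) (\<lambda>p. ring.eval (RR Quot II) p (pi rr))"
      then have pc: "p \<in> carrier (Kb[X]\<^bsub>RR Quot II\<^esub>)" and pe: "ring.eval (RR Quot II) p (pi rr) = \<zero>\<^bsub>RR Quot II\<^esub>"
        unfolding a_kernel_def' by auto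
      show "p \<in> {[]}"
      proof (rule ccontr)
        assume "p \<notin> {[]}"
        then have pne: "p \<noteq> []" by simp
        have pol: "set p \<subseteq> Kb" "hd p \<noteq> \<zero>\<^bsub>RR Quot II\<^esub>"
          using pc pne unfolding univ_poly_carrier[symmetric] polynomial_def by auto
        define cc where "cc y = (SOME c. (c = 0 \<or> 0 \<le> v [:c:]) \<and> pi (Fract [:c:] 1) = y)" for y
        have ccp: "(cc y = 0 \<or> 0 \<le> v [:cc y:]) \<and> pi (Fract [:cc y:] 1) = y" if "y \<in> Kb" for y
        proof -
          from that obtain c where "(c = 0 \<or> 0 \<le> v [:c:]) \<and> pi (Fract [:c:] 1) = y" unfolding Cst_def by auto
          then show ?thesis unfolding cc_def by (rule someI)
        qed
        define p' where "p' = map (\<lambda>y. Fract [:cc y:] 1) p"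
        have mp: "map pi p' = p" unfolding p'_def map_map by (rule map_idI) (use pol(1) ccp in auto)
        have sp: "set p' \<subseteq> carrier RR"
        proof
          fix z assume "z \<in> set p'"
          then obtain y where y: "y \<in> set p" "z = Fract [:cc y:] 1" unfolding p'_def by auto
          then have yK: "y \<in> Kb" using pol(1) by auto
          show "z \<in> carrier RR" unfolding y(2) by (rule const_in) (use ccp[OF yK] in simp)
        qed
        have "pi (ring.eval RR p' rr) = ring.eval (RR Quot II) p (pi rr)" using pih.eval_hom'[OF rr_carrier sp] mp by simp
        then have "pi (ring.eval RR p' rr) = II" using pe quot_zero by simp
        then have inI: "ring.eval RR p' rr \<in> II" using pi_zero_iff RRc.eval_in_carrier[OF sp rr_carrier] by blast
        define m where "m = length p - 1"
        define d where "d k = cc (p ! (m - k))" for k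
        have lp: "length p = Suc m" unfolding m_def using pne by simp
        have ev: "ring.eval RR p' rr = (\<Sum>k\<le>m. Fract [:d k:] 1 * rr ^ k)"
          unfolding eval_RR p'_def d_def using lp by (simp add: lessThan_Suc_atMost[symmetric])
        have dk: "\<forall>k\<le>m. d k = 0 \<or> 0 \<le> v [:d k:]"
        proof (intro allI impI)
          fix k assume "k \<le> m"
          then have "p ! (m - k) \<in> Kb" using pol(1) lp by (auto intro: nth_mem)
          then show "d k = 0 \<or> 0 \<le> v [:d k:]" unfolding d_def using ccp by blast
        qed
        have hdK: "hd p \<in> Kb" using pol(1) pne by auto
        have dm: "d m = cc (hd p)" unfolding d_def using pne by (simp add: hd_conv_nth)
        have cm: "Fract [:d m:] 1 \<in> carrier RR" using ccp[OF hdK] dm const_in by auto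
        have "pi (Fract [:d m:] 1) \<noteq> II" using ccp[OF hdK] dm pol(2) quot_zero by simp
        then have "Fract [:d m:] 1 \<notin> II" using pi_zero_iff[OF cm] by simp
        then have dm0: "d m \<noteq> 0" unfolding max_ideal_def by (cases "d m = 0") auto
        then have "\<not> 0 < v [:d m:]" using \<open>Fract [:d m:] 1 \<notin> II\<close> unfolding max_ideal_def by (simp add: tvf_const)
        then have "v [:d m:] = 0" using ccp[OF hdK] dm dm0 by simp
        note this dm0
        then show False using core[OF dk dm0] inI ev by simp
      qed
    qed
  qed
  show ?thesis using RF.trivial_ker_imp_transcendental[OF Kb_subring xc ker] unfolding over_def .
qed

end


context pctx begin

interpretation RF: field "RR Quot II" by (rule RF_field)

lemma transc_L:
  assumes L: "subfield L (RR Quot II)" "Kb \<subseteq> L"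
    and alg: "\<forall>y\<in>L. \<not> ring.transcendental (RR Quot II) Kb y"
  shows "ring.transcendental (RR Quot II) L (pi rr)"
proof (rule ccontr)
  assume na: "\<not> ring.transcendental (RR Quot II) L (pi rr)"
  have xc: "pi rr \<in> carrier (RR Quot II)" using rr_carrier quot_carrier by auto
  have subL: "subring L (RR Quot II)" using L(1) by (rule subfieldE(1))
  obtain p where pc: "p \<in> carrier (L[X]\<^bsub>RR Quot II\<^esub>)" and pne: "p \<noteq> []"
    and pe: "ring.eval (RR Quot II) p (pi rr) = \<zero>\<^bsub>RR Quot II\<^esub>"
    using RF.algebraicE[OF subL xc] na unfolding over_def by blast
  have pol: "set p \<subseteq> L" "hd p \<noteq> \<zero>\<^bsub>RR Quot II\<^esub>"
    using pc pne unfolding univ_poly_carrier[symmetric] polynomial_def by auto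
  have Lc: "L \<subseteq> carrier (RR Quot II)" using subringE(1)[OF subL] .
  have setC: "set p \<subseteq> carrier (RR Quot II)" using pol(1) Lc by auto
  have algp: "(ring.algebraic (RR Quot II) over Kb) y" if "y \<in> set p" for y
    using alg that pol(1) unfolding over_def by auto
  define Fin where "Fin = ring.finite_extension (RR Quot II) Kb p"
  have dimFin: "ring.finite_dimension (RR Quot II) Kb Fin"
    unfolding Fin_def by (rule RF.finite_extension_finite_dimension(1)[OF Kb_subfield setC algp])
  have subFin: "subfield Fin (RR Quot II)"
    unfolding Fin_def by (rule RF.finite_extension_is_subfield[OF Kb_subfield setC algp])
  have "set p \<subseteq> Fin" unfolding Fin_def by (rule RF.finite_extension_mem[OF Kb_subring setC])
  then have pFin: "p \<in> carrier (Fin[X]\<^bsub>RR Quot II\<^esub>)"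
    using pol(2) unfolding univ_poly_carrier[symmetric] polynomial_def by auto
  have algFin: "(ring.algebraic (RR Quot II) over Fin) (pi rr)"
    by (rule RF.algebraicI[OF pFin pne pe])
  have dimS: "ring.finite_dimension (RR Quot II) Fin (ring.simple_extension (RR Quot II) Fin (pi rr))"
    using RF.finite_dimension_simple_extension[OF subFin xc] algFin by simp
  have dimK: "ring.finite_dimension (RR Quot II) Kb (ring.simple_extension (RR Quot II) Fin (pi rr))"
    by (rule RF.telescopic_base_dim(1)[OF Kb_subfield subFin dimFin dimS])
  have subS: "subring (ring.simple_extension (RR Quot II) Fin (pi rr)) (RR Quot II)"
    by (rule RF.simple_extension_is_subring[OF subfieldE(1)[OF subFin] xc])
  have memS: "pi rr \<in> ring.simple_extension (RR Quot II) Fin (pi rr)"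
    by (rule RF.simple_extension_mem[OF subfieldE(1)[OF subFin] xc])
  have "(ring.algebraic (RR Quot II) over Kb) (pi rr)"
    by (rule RF.finite_dimension_imp_algebraic[OF Kb_subfield subS dimK memS])
  then show False using transc_Kb unfolding over_def by simp
qed

end

theorem proposition3p4:
  fixes v :: "'a::field poly \<Rightarrow> 'g::linordered_ab_group_add"
    and Q h :: "'a poly" and e :: nat
  assumes "krull_valuation v"
    and "key_polynomial v Q"
    and "e \<ge> 1"
    and "h \<noteq> 0"
    and "Polynomial.degree h < Polynomial.degree Q"
    and "v (Q ^ e) = v h"
  shows "trunc_val_frac v Q (Fract (Q ^ e) h) = 0
    \<and> ring.transcendental (residue_field v Q) (base_residue_field v Q) (residue v Q (Fract (Q ^ e) h))
    \<and> (\<forall>L. subfield L (residue_field v Q) \<and> base_residue_field v Q \<subseteq> L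
             \<and> (\<forall>y\<in>L. \<not> ring.transcendental (residue_field v Q) (base_residue_field v Q) y)
           \<longrightarrow> ring.transcendental (residue_field v Q) L (residue v Q (Fract (Q ^ e) h)))"
proof -
  interpret pctx v Q h e
  proof (unfold_locales)
    show "krull_valuation v" by fact
    show "key_polynomial v Q" by fact
    show "1 \<le> Polynomial.degree Q" using assms(5) by simp
    show "1 \<le> e" by fact
    show "h \<noteq> 0" by fact
    show "Polynomial.degree h < Polynomial.degree Q" by fact
    show "v (Q ^ e) = v h" by fact
  qed
  have rf: "residue_field v Q = RR Quot II" unfolding residue_field_def ..
  have rs: "residue v Q (Fract (Q ^ e) h) = pi rr" unfolding residue_def rr_def ..
  show ?thesis
    unfolding rf rs base_eq
    using tvf_rr transc_Kb transc_L unfolding rr_def by blast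
qed


end
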